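(* Let $M,N\ge 1$ and $p,r\ge 1$ be integers, and let $c_p^r=\mathrm{Tr}(T_p^r)$ be the truncated moments of the deformed Fourier model defined in the context. Then $$c_p^r=\frac{1}{M^{r+1}N}\,\#\Big\{(i,a,b)\in\mathbb Z_M^r\times\mathbb Z_M^p\times\mathbb Z_N^p\ :\ \text{condition }(E_x)\text{ holds for every }x=1,\dots,r\Big\},$$ where $(E_x)$ is the condition that the two multisets (of $2p$ elements of $\mathbb Z_M\times\mathbb Z_N$, counted with multiplicity) $$\big\{(i_x+a_y,b_y),\ (i_{x+1}+a_y,b_{y+1})\ :\ y=1,\dots,p\big\}\quad\text{and}\quad\big\{(i_x+a_y,b_{y+1}),\ (i_{x+1}+a_y,b_y)\ :\ y=1,\dots,p\big\}$$ coincide, with cyclic conventions $i_{r+1}=i_1$, $b_{p+1}=b_1$, and addition taken in $\mathbb Z_M$.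
   Context: Let $w_M=e^{2\pi\sqrt{-1}/M}$, $w_N=e^{2\pi\sqrt{-1}/N}$, $I=\mathbb Z_M\times\mathbb Z_N$, $K=MN$. For $Q=(Q_{ib})_{i\in\mathbb Z_M,b\in\mathbb Z_N}\in\mathbb T^{MN}$ define the matrix $H(Q)\in M_I(\mathbb C)$ by $H(Q)_{(i,a),(j,b)}=Q_{ib}\,w_M^{ij}\,w_N^{ab}$ (a complex Hadamard matrix). Write $H_\alpha(Q)\in\mathbb T^{I}$ for its row indexed by $\alpha\in I$. For $\alpha,\beta\in I$ let $\xi=H_\alpha(Q)/H_\beta(Q)$ (entrywise quotient) and let $U_{\alpha\beta}(Q)=\frac1K\xi\xi^*\in M_I(\mathbb C)$ be the orthogonal projection onto $\mathbb C\xi$. Let $dQ$ be the normalized Haar measure on $\mathbb T^{MN}$. Define the matrix $T_p$ indexed by $I^p\times I^p$ by $(T_p)_{\alpha_1\ldots\alpha_p,\beta_1\ldots\beta_p}=\int_{\mathbb T^{MN}}\frac1K\mathrm{Tr}\big(U_{\alpha_1\beta_1}(Q)\cdots U_{\alpha_p\beta_p}(Q)\big)\,dQ$, and set $c_p^r=\mathrm{Tr}(T_p^r)$, where $\mathrm{Tr}$ denotes the usual (unnormalized) matrix trace. *)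

theory Defs
  imports "HOL-Probability.Probability" "HOL-Library.Multiset"
begin

text \<open>Matrices indexed by a finite set S are represented as functions S \<Rightarrow> S \<Rightarrow> complex.\<close>

definition mmult :: "'i set \<Rightarrow> ('i \<Rightarrow> 'i \<Rightarrow> complex) \<Rightarrow> ('i \<Rightarrow> 'i \<Rightarrow> complex) \<Rightarrow> 'i \<Rightarrow> 'i \<Rightarrow> complex" where
  "mmult S A B = (\<lambda>x z. \<Sum>y\<in>S. A x y * B y z)"

definition mid :: "'i \<Rightarrow> 'i \<Rightarrow> complex" where
  "mid = (\<lambda>x y. if x = y then 1 else 0)"

definition mtrace :: "'i set \<Rightarrow> ('i \<Rightarrow> 'i \<Rightarrow> complex) \<Rightarrow> complex" where
  "mtrace S A = (\<Sum>x\<in>S. A x x)"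

definition mlistprod :: "'i set \<Rightarrow> ('i \<Rightarrow> 'i \<Rightarrow> complex) list \<Rightarrow> 'i \<Rightarrow> 'i \<Rightarrow> complex" where
  "mlistprod S As = foldr (mmult S) As mid"

fun mpow :: "'i set \<Rightarrow> ('i \<Rightarrow> 'i \<Rightarrow> complex) \<Rightarrow> nat \<Rightarrow> 'i \<Rightarrow> 'i \<Rightarrow> complex" where
  "mpow S A 0 = mid"
| "mpow S A (Suc n) = mmult S (mpow S A n) A"

text \<open>Index set I = Z_M x Z_N, represented as {0..<M} x {0..<N}.\<close>
definition idx :: "nat \<Rightarrow> nat \<Rightarrow> (nat \<times> nat) set" where
  "idx M N = {0..<M} \<times> {0..<N}"

definition root_unity :: "nat \<Rightarrow> complex" where
  "root_unity M = cis (2 * pi / real M)"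

definition Hmat :: "nat \<Rightarrow> nat \<Rightarrow> (nat \<times> nat \<Rightarrow> complex) \<Rightarrow> nat \<times> nat \<Rightarrow> nat \<times> nat \<Rightarrow> complex" where
  "Hmat M N Q = (\<lambda>(i,a) (j,b). Q (i,b) * root_unity M ^ (i*j) * root_unity N ^ (a*b))"

definition Umat :: "nat \<Rightarrow> nat \<Rightarrow> (nat \<times> nat \<Rightarrow> complex) \<Rightarrow> nat \<times> nat \<Rightarrow> nat \<times> nat \<Rightarrow> nat \<times> nat \<Rightarrow> nat \<times> nat \<Rightarrow> complex" where
  "Umat M N Q \<alpha> \<beta> =
     (let \<xi> = (\<lambda>\<gamma>. Hmat M N Q \<alpha> \<gamma> / Hmat M N Q \<beta> \<gamma>)
      in (\<lambda>\<gamma> \<delta>. \<xi> \<gamma> * cnj (\<xi> \<delta>) / of_nat (M * N)))"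

text \<open>Normalized Haar measure on the unit circle T (pushforward of uniform measure on [0,1)),
  and the product (normalized Haar) measure on T^{MN}.\<close>
definition circle_haar :: "complex measure" where
  "circle_haar = distr (uniform_measure lborel {0..<1::real}) borel (\<lambda>t. cis (2 * pi * t))"

definition torus_haar :: "nat \<Rightarrow> nat \<Rightarrow> (nat \<times> nat \<Rightarrow> complex) measure" where
  "torus_haar M N = PiM (idx M N) (\<lambda>_. circle_haar)"

text \<open>Index set I^p, as functions {0..<p} -> I.\<close>
definition idxp :: "nat \<Rightarrow> nat \<Rightarrow> nat \<Rightarrow> (nat \<Rightarrow> nat \<times> nat) set" where
  "idxp M N p = PiE {0..<p} (\<lambda>_. idx M N)"

definition Tmat :: "nat \<Rightarrow> nat \<Rightarrow> nat \<Rightarrow> (nat \<Rightarrow> nat \<times> nat) \<Rightarrow> (nat \<Rightarrow> nat \<times> nat) \<Rightarrow> complex" where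
  "Tmat M N p \<alpha> \<beta> =
     integral\<^sup>L (torus_haar M N)
       (\<lambda>Q. mtrace (idx M N) (mlistprod (idx M N) (map (\<lambda>k. Umat M N Q (\<alpha> k) (\<beta> k)) [0..<p]))
             / of_nat (M * N))"

definition cpr :: "nat \<Rightarrow> nat \<Rightarrow> nat \<Rightarrow> nat \<Rightarrow> complex" where
  "cpr M N p r = mtrace (idxp M N p) (mpow (idxp M N p) (Tmat M N p) r)"

text \<open>Condition (E_x), with indices shifted to start at 0 (x < r, y < p), cyclic conventions,
  addition in Z_M.\<close>
definition cond_E :: "nat \<Rightarrow> nat \<Rightarrow> nat \<Rightarrow> (nat \<Rightarrow> nat) \<Rightarrow> (nat \<Rightarrow> nat) \<Rightarrow> (nat \<Rightarrow> nat) \<Rightarrow> nat \<Rightarrow> bool" where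
  "cond_E M p r i a b x \<longleftrightarrow>
     image_mset (\<lambda>y. ((i x + a y) mod M, b y)) (mset [0..<p])
       + image_mset (\<lambda>y. ((i ((x+1) mod r) + a y) mod M, b ((y+1) mod p))) (mset [0..<p])
     = image_mset (\<lambda>y. ((i x + a y) mod M, b ((y+1) mod p))) (mset [0..<p])
       + image_mset (\<lambda>y. ((i ((x+1) mod r) + a y) mod M, b y)) (mset [0..<p])"

end

theory Submission
  imports Defs
begin

lemma meas_cis: "(\<lambda>t. cis (2 * pi * t)) \<in> borel_measurable (uniform_measure lborel {0..<1::real})"
  by (simp add: measurable_cong_sets[OF sets_uniform_measure refl] borel_measurable_continuous_onI continuous_intros)
lemma circle_prob: "prob_space circle_haar"
  unfolding circle_haar_def
  by (intro prob_space.prob_space_distr prob_space_uniform_measure meas_cis) auto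

lemma cis_int_integral:
  fixes k :: int
  shows "integral\<^sup>L lborel (\<lambda>x. indicator {0..1::real} x *\<^sub>R cis (2*pi*k*x)) = (if k = 0 then 1 else 0)"
proof (cases "k = 0")
  case True
  have "integral\<^sup>L lborel (\<lambda>x. indicator {0..1::real} x *\<^sub>R cis (2*pi*k*x)) = of_real 1 - of_real 0"
    using True
    by (intro integral_FTC_atLeastAtMost[where F="\<lambda>x. of_real x"])
       (auto intro!: derivative_eq_intros continuous_intros simp: has_vector_derivative_def fun_eq_iff scaleR_conv_of_real)
  then show ?thesis using True by simp
next
  case False
  define c where "c = 2*pi*real_of_int k"
  have c0: "c \<noteq> 0" using False by (simp add: c_def)
  have "integral\<^sup>L lborel (\<lambda>x. indicator {0..1::real} x *\<^sub>R cis (c*x)) =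
       cis (c*1) / (\<i>*c) - cis (c*0) / (\<i>*c)"
  proof (intro integral_FTC_atLeastAtMost[where F="\<lambda>x. cis (c*x) / (\<i>*c)"])
    fix x :: real
    have "((\<lambda>x. cis (c*x)) has_derivative (\<lambda>t. (c*t) *\<^sub>R (\<i> * cis (c*x)))) (at x within {0..1})"
      by (intro has_derivative_cis derivative_eq_intros) auto
    then have "((\<lambda>x. cis (c*x) / (\<i>*c)) has_derivative (\<lambda>t. ((c*t) *\<^sub>R (\<i> * cis (c*x))) / (\<i>*c))) (at x within {0..1})"
      by (intro derivative_eq_intros) (auto simp: c0)
    moreover have "(\<lambda>t. ((c*t) *\<^sub>R (\<i> * cis (c*x))) / (\<i>*c)) = (\<lambda>t. t *\<^sub>R cis (c*x))"
      using c0 by (auto simp: scaleR_conv_of_real field_simps)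
    ultimately show "((\<lambda>x. cis (c*x) / (\<i>*c)) has_vector_derivative cis (c*x)) (at x within {0..1})"
      by (simp add: has_vector_derivative_def)
  qed (auto intro!: continuous_intros)
  also have "cis (c*1) = 1" unfolding c_def
    by (metis cis_multiple_2pi Ints_of_int mult.assoc mult.commute mult_1 )
  finally show ?thesis using False by (simp add: c_def mult.assoc)
qed

lemma U_eq: "uniform_measure lborel {0..<1::real} = density lborel (\<lambda>x. ennreal (indicator {0..<1::real} x))"
  unfolding uniform_measure_def by (simp add: divide_ennreal_def ennreal_indicator)

lemma cis_pow_cnj: "cis a ^ m * cnj (cis a) ^ n = cis (real_of_int (int m - int n) * a)"
proof -
  have "cis a ^ m = cis (real m * a)" by (rule Complex.DeMoivre)
  moreover have "cnj (cis a) ^ n = cis (real n * (-a))" by (simp add: cis_cnj Complex.DeMoivre)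
  ultimately show ?thesis by (simp add: cis_mult algebra_simps)
qed

lemma cis_arg_eq: "cis ((real m - real n) * (2 * pi * x)) = cis (2 * pi * (real m - real n) * x)"
  by (simp add: algebra_simps)

lemma circle_integrable: "integrable circle_haar (\<lambda>z. z^m * cnj z^n)"
  unfolding circle_haar_def
proof (subst integrable_distr_eq)
  show "(\<lambda>t. cis (2 * pi * t)) \<in> uniform_measure lborel {0..<1} \<rightarrow>\<^sub>M borel" by (rule meas_cis)
  show "(\<lambda>z. z ^ m * cnj z ^ n) \<in> borel_measurable borel"
    by (intro borel_measurable_continuous_onI continuous_intros)
  interpret prob_space "uniform_measure lborel {0..<1::real}" by (intro prob_space_uniform_measure) auto
  show "integrable (uniform_measure lborel {0..<1}) (\<lambda>x. cis (2 * pi * x) ^ m * cnj (cis (2 * pi * x)) ^ n)"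
    by (rule integrable_const_bound[where B=1])
       (auto simp: norm_mult norm_power measurable_cong_sets[OF sets_uniform_measure refl]
             intro!: borel_measurable_continuous_onI continuous_intros)
qed

lemma circle_moment: "integral\<^sup>L circle_haar (\<lambda>z. z^m * cnj z^n) = (if m = n then 1 else 0)"
proof -
  have "integral\<^sup>L circle_haar (\<lambda>z. z^m * cnj z^n) =
        integral\<^sup>L (uniform_measure lborel {0..<1::real}) (\<lambda>t. cis (2*pi*t)^m * cnj (cis (2*pi*t))^n)"
    unfolding circle_haar_def
    by (rule integral_distr[OF meas_cis]) (intro borel_measurable_continuous_onI continuous_intros)
  also have "\<dots> = integral\<^sup>L lborel (\<lambda>t. indicator {0..<1::real} t *\<^sub>R cis (2*pi*real_of_int (int m - int n)*t))"
    unfolding U_eq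
    by (subst integral_density) (auto simp: cis_pow_cnj cis_arg_eq intro!: borel_measurable_continuous_onI continuous_intros
        Bochner_Integration.integral_cong)
  also have "\<dots> = integral\<^sup>L lborel (\<lambda>t. indicator {0..1::real} t *\<^sub>R cis (2*pi*real_of_int (int m - int n)*t))"
  proof (rule integral_cong_AE)
    show "AE x in lborel. indicator {0..<1::real} x *\<^sub>R cis (2*pi*real_of_int (int m - int n)*x) =
       indicator {0..1::real} x *\<^sub>R cis (2*pi*real_of_int (int m - int n)*x)"
      using AE_lborel_singleton[of 1] by eventually_elim (auto split: split_indicator)
  qed (intro borel_measurable_scaleR borel_measurable_indicator borel_measurable_continuous_onI continuous_intros; simp)+
  also have "\<dots> = (if m = n then 1 else 0)"
    by (subst cis_int_integral) auto
  finally show ?thesis .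
qed

lemma circle_AE: "AE z in circle_haar. cmod z = 1"
  unfolding circle_haar_def
  by (subst AE_distr_iff[OF meas_cis]) auto

lemma finite_idx[simp]: "finite (idx M N)" by (simp add: idx_def)

lemma torus_prod: "product_prob_space (\<lambda>_. circle_haar)"
  by (simp add: product_prob_space_def product_sigma_finite_def circle_prob prob_space_imp_sigma_finite
      product_prob_space_axioms_def)

lemma torus_prob: "prob_space (torus_haar M N)"
  unfolding torus_haar_def by (intro prob_space_PiM circle_prob)

lemma torus_moment:
  "integral\<^sup>L (torus_haar M N) (\<lambda>Q. \<Prod>q\<in>idx M N. Q q ^ e q * cnj (Q q) ^ f q)
     = (if \<forall>q\<in>idx M N. e q = f q then 1 else 0)"
proof -
  interpret product_prob_space "\<lambda>_. circle_haar" by (rule torus_prod)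
  have "integral\<^sup>L (torus_haar M N) (\<lambda>Q. \<Prod>q\<in>idx M N. Q q ^ e q * cnj (Q q) ^ f q)
      = (\<Prod>q\<in>idx M N. integral\<^sup>L circle_haar (\<lambda>z. z ^ e q * cnj z ^ f q))"
    unfolding torus_haar_def
    by (rule product_integral_prod[where f="\<lambda>q z. z ^ e q * cnj z ^ f q"]) (auto intro: circle_integrable)
  also have "\<dots> = (if \<forall>q\<in>idx M N. e q = f q then 1 else 0)"
    by (auto simp: circle_moment intro: prod.neutral)
  finally show ?thesis .
qed

lemma torus_integrable:
  "integrable (torus_haar M N) (\<lambda>Q. \<Prod>q\<in>idx M N. Q q ^ e q * cnj (Q q) ^ f q)"
proof -
  interpret product_prob_space "\<lambda>_. circle_haar" by (rule torus_prod)
  show ?thesis unfolding torus_haar_def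
    by (rule product_integrable_prod[where f="\<lambda>q z. z ^ e q * cnj z ^ f q"]) (auto intro: circle_integrable)
qed

lemma torus_AE: "AE Q in torus_haar M N. \<forall>q\<in>idx M N. cmod (Q q) = 1"
  unfolding torus_haar_def
  by (rule eventually_ball_finite) (auto intro!: AE_PiM_component circle_prob circle_AE)

lemma sum_PiE_insert:
  assumes "x \<notin> S"
  shows "(\<Sum>g\<in>PiE (insert x S) T. h g) = (\<Sum>y\<in>T x. \<Sum>g\<in>PiE S T. h (g(x:=y)))"
proof -
  have "(\<Sum>g\<in>PiE (insert x S) T. h g) = (\<Sum>p\<in>T x \<times> PiE S T. h ((\<lambda>(y, g). g(x := y)) p))"
    unfolding PiE_insert_eq by (rule sum.reindex[OF inj_combinator[OF assms], unfolded comp_def])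
  also have "\<dots> = (\<Sum>y\<in>T x. \<Sum>g\<in>PiE S T. h (g(x:=y)))"
    by (simp add: sum.cartesian_product split_def)
  finally show ?thesis .
qed

lemma sum_delta_r: "finite S \<Longrightarrow> y \<in> S \<Longrightarrow> (\<Sum>z\<in>S. c z * (if z = y then 1 else 0)) = (c y :: 'a::comm_semiring_1)"
proof -
  assume "finite S" "y \<in> S"
  have "(\<Sum>z\<in>S. c z * (if z = y then 1 else 0)) = (\<Sum>z\<in>S. if z = y then c z else 0)" by (intro sum.cong) auto
  then show ?thesis using \<open>finite S\<close> \<open>y \<in> S\<close> by simp
qed

lemma sum_delta_l: "finite S \<Longrightarrow> y \<in> S \<Longrightarrow> (\<Sum>z\<in>S. (if y = z then 1 else 0) * c z) = (c y :: 'a::comm_semiring_1)"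
proof -
  assume "finite S" "y \<in> S"
  have "(\<Sum>z\<in>S. (if y = z then 1 else 0) * c z) = (\<Sum>z\<in>S. if y = z then c z else 0)" by (intro sum.cong) auto
  then show ?thesis using \<open>finite S\<close> \<open>y \<in> S\<close> by simp
qed

lemma mlp_rank1:
  assumes "finite S" "m < n" "y \<in> S"
  shows "mlistprod S (map (\<lambda>k x y. f k x * g k y) [m..<n]) x y
         = f m x * (\<Prod>k\<in>{m..<n-1}. (\<Sum>z\<in>S. g k z * f (Suc k) z)) * g (n-1) y"
  using assms(2)
proof (induction "n - m" arbitrary: m x)
  case 0
  then show ?case by simp
next
  case (Suc d)
  have split: "[m..<n] = m # [Suc m..<n]" using Suc.prems by (simp add: upt_conv_Cons)
  show ?case
  proof (cases "Suc m = n")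
    case True
    then have "mlistprod S (map (\<lambda>k x y. f k x * g k y) [m..<n]) x y = (\<Sum>z\<in>S. f m x * g m z * mid z y)"
      by (simp add: split mlistprod_def mmult_def)
    also have "\<dots> = f m x * g m y" using assms(1,3) by (simp add: mid_def sum_delta_r[where c="\<lambda>z. f m x * g m z"])
    finally show ?thesis using True by auto
  next
    case False
    then have lt: "Suc m < n" using Suc.prems by simp
    have "mlistprod S (map (\<lambda>k x y. f k x * g k y) [m..<n]) x y
        = (\<Sum>z\<in>S. f m x * g m z * mlistprod S (map (\<lambda>k x y. f k x * g k y) [Suc m..<n]) z y)"
      by (simp add: split mlistprod_def mmult_def)
    also have "\<dots> = (\<Sum>z\<in>S. f m x * g m z * (f (Suc m) z * (\<Prod>k\<in>{Suc m..<n-1}. (\<Sum>z\<in>S. g k z * f (Suc k) z)) * g (n-1) y))"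
      using Suc.hyps(1)[of "Suc m"] Suc.hyps(2) lt by simp
    also have "\<dots> = f m x * (\<Sum>z\<in>S. g m z * f (Suc m) z) * (\<Prod>k\<in>{Suc m..<n-1}. (\<Sum>z\<in>S. g k z * f (Suc k) z)) * g (n-1) y"
      by (simp add: sum_distrib_left sum_distrib_right mult_ac)
    also have "\<dots> = f m x * (\<Prod>k\<in>{m..<n-1}. (\<Sum>z\<in>S. g k z * f (Suc k) z)) * g (n-1) y"
      using lt by (simp add: prod.atLeast_Suc_lessThan mult_ac)
    finally show ?thesis .
  qed
qed

lemma trace_rank1:
  assumes "finite S" "0 < n"
  shows "mtrace S (mlistprod S (map (\<lambda>k x y. f k x * g k y) [0..<n]))
         = (\<Prod>k<n. (\<Sum>z\<in>S. g k z * f ((k+1) mod n) z))"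
proof -
  have "mtrace S (mlistprod S (map (\<lambda>k x y. f k x * g k y) [0..<n]))
      = (\<Sum>x\<in>S. f 0 x * (\<Prod>k\<in>{0..<n-1}. (\<Sum>z\<in>S. g k z * f (Suc k) z)) * g (n-1) x)"
    unfolding mtrace_def using assms by (intro sum.cong refl mlp_rank1) auto
  also have "\<dots> = (\<Prod>k\<in>{0..<n-1}. (\<Sum>z\<in>S. g k z * f (Suc k) z)) * (\<Sum>z\<in>S. g (n-1) z * f 0 z)"
    by (simp add: sum_distrib_left sum_distrib_right mult_ac)
  also have "(\<Prod>k\<in>{0..<n-1}. (\<Sum>z\<in>S. g k z * f (Suc k) z)) = (\<Prod>k\<in>{0..<n-1}. (\<Sum>z\<in>S. g k z * f ((k+1) mod n) z))"
    by (intro prod.cong refl) auto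
  also have "(\<Sum>z\<in>S. g (n-1) z * f 0 z) = (\<Sum>z\<in>S. g (n-1) z * f ((n-1+1) mod n) z)"
    using assms by simp
  also have "(\<Prod>k\<in>{0..<n-1}. (\<Sum>z\<in>S. g k z * f ((k+1) mod n) z)) * \<dots> = (\<Prod>k<n. (\<Sum>z\<in>S. g k z * f ((k+1) mod n) z))"
  proof -
    have "{..<n} = insert (n-1) {0..<n-1}" using assms by auto
    then show ?thesis by (simp add: mult.commute)
  qed
  finally show ?thesis .
qed

definition pext :: "nat \<Rightarrow> 'i \<Rightarrow> (nat \<Rightarrow> 'i) \<Rightarrow> 'i \<Rightarrow> nat \<Rightarrow> 'i" where
  "pext n x \<alpha> y k = (if k = 0 then x else if k \<le> n then \<alpha> (k-1) else y)"

lemma mpow_path: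
  assumes "finite S" "x \<in> S" "y \<in> S"
  shows "mpow S A (Suc n) x y = (\<Sum>\<alpha>\<in>PiE {0..<n} (\<lambda>_. S). \<Prod>k<Suc n. A (pext n x \<alpha> y k) (pext n x \<alpha> y (Suc k)))"
  using assms(3)
proof (induction n arbitrary: y)
  case 0
  then show ?case using assms(1,2) by (simp add: mmult_def mid_def pext_def sum_delta_l[where c="\<lambda>z. A z y"])
next
  case (Suc n)
  have "mpow S A (Suc (Suc n)) x y = (\<Sum>z\<in>S. mpow S A (Suc n) x z * A z y)"
    by (simp add: mmult_def)
  also have "\<dots> = (\<Sum>z\<in>S. \<Sum>\<alpha>\<in>PiE {0..<n} (\<lambda>_. S). (\<Prod>k<Suc n. A (pext n x \<alpha> z k) (pext n x \<alpha> z (Suc k))) * A z y)"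
    using Suc.IH by (simp add: sum_distrib_right)
  also have "\<dots> = (\<Sum>z\<in>S. \<Sum>\<alpha>\<in>PiE {0..<n} (\<lambda>_. S). \<Prod>k<Suc (Suc n). A (pext (Suc n) x (\<alpha>(n:=z)) y k) (pext (Suc n) x (\<alpha>(n:=z)) y (Suc k)))"
  proof (intro sum.cong refl)
    fix z \<alpha> assume "z \<in> S" "\<alpha> \<in> PiE {0..<n} (\<lambda>_. S)"
    have e: "pext (Suc n) x (\<alpha>(n:=z)) y k = pext n x \<alpha> z k" if "k \<le> Suc n" for k
      using that by (auto simp: pext_def)
    have "(\<Prod>k<Suc (Suc n). A (pext (Suc n) x (\<alpha>(n:=z)) y k) (pext (Suc n) x (\<alpha>(n:=z)) y (Suc k)))
        = (\<Prod>k<Suc n. A (pext (Suc n) x (\<alpha>(n:=z)) y k) (pext (Suc n) x (\<alpha>(n:=z)) y (Suc k))) * A z y"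
      by (simp add: pext_def)
    also have "(\<Prod>k<Suc n. A (pext (Suc n) x (\<alpha>(n:=z)) y k) (pext (Suc n) x (\<alpha>(n:=z)) y (Suc k)))
        = (\<Prod>k<Suc n. A (pext n x \<alpha> z k) (pext n x \<alpha> z (Suc k)))"
      by (intro prod.cong refl) (simp add: e)
    finally show "(\<Prod>k<Suc n. A (pext n x \<alpha> z k) (pext n x \<alpha> z (Suc k))) * A z y =
         (\<Prod>k<Suc (Suc n). A (pext (Suc n) x (\<alpha>(n:=z)) y k) (pext (Suc n) x (\<alpha>(n:=z)) y (Suc k)))" by (rule sym)
  qed
  also have "\<dots> = (\<Sum>\<alpha>\<in>PiE {0..<Suc n} (\<lambda>_. S). \<Prod>k<Suc (Suc n). A (pext (Suc n) x \<alpha> y k) (pext (Suc n) x \<alpha> y (Suc k)))"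
    by (simp add: atLeast0_lessThan_Suc sum_PiE_insert)
  finally show ?case .
qed

lemma trace_mpow:
  assumes "finite S" "0 < r"
  shows "mtrace S (mpow S A r) = (\<Sum>\<beta>\<in>PiE {0..<r} (\<lambda>_. S). \<Prod>k<r. A (\<beta> k) (\<beta> ((k+1) mod r)))"
proof -
  obtain n where r: "r = Suc n" using assms(2) by (cases r) auto
  have "mtrace S (mpow S A r) = (\<Sum>x\<in>S. \<Sum>\<alpha>\<in>PiE {0..<n} (\<lambda>_. S). \<Prod>k<Suc n. A (pext n x \<alpha> x k) (pext n x \<alpha> x (Suc k)))"
    unfolding mtrace_def r using assms(1) by (intro sum.cong refl mpow_path) auto
  also have "\<dots> = (\<Sum>x\<in>S. \<Sum>\<alpha>\<in>PiE {0..<n} (\<lambda>_. S). \<Prod>k<Suc n. A (restrict (pext n x \<alpha> x) {0..<Suc n} k) (restrict (pext n x \<alpha> x) {0..<Suc n} ((k+1) mod Suc n)))"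
  proof (intro sum.cong refl prod.cong)
    fix x \<alpha> k assume "k \<in> {..<Suc n}"
    then have k: "k < Suc n" by simp
    show "A (pext n x \<alpha> x k) (pext n x \<alpha> x (Suc k)) =
          A (restrict (pext n x \<alpha> x) {0..<Suc n} k) (restrict (pext n x \<alpha> x) {0..<Suc n} ((k + 1) mod Suc n))"
    proof (cases "k < n")
      case True
      then show ?thesis using k by (simp add: pext_def)
    next
      case False
      then have "k = n" using k by simp
      then show ?thesis by (simp add: pext_def)
    qed
  qed
  also have "\<dots> = (\<Sum>p\<in>S \<times> PiE {0..<n} (\<lambda>_. S). (\<lambda>\<beta>. \<Prod>k<Suc n. A (\<beta> k) (\<beta> ((k+1) mod Suc n))) ((\<lambda>(x,\<alpha>). restrict (pext n x \<alpha> x) {0..<Suc n}) p))"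
    by (simp add: sum.cartesian_product split_def)
  also have "\<dots> = (\<Sum>\<beta>\<in>PiE {0..<Suc n} (\<lambda>_. S). \<Prod>k<Suc n. A (\<beta> k) (\<beta> ((k+1) mod Suc n)))"
  proof (rule sum.reindex_bij_witness[where i="\<lambda>\<beta>. (\<beta> 0, \<lambda>k\<in>{0..<n}. \<beta> (Suc k))"])
    fix p assume "p \<in> S \<times> PiE {0..<n} (\<lambda>_. S)"
    then show "(\<lambda>\<beta>. (\<beta> 0, \<lambda>k\<in>{0..<n}. \<beta> (Suc k))) ((\<lambda>(x,\<alpha>). restrict (pext n x \<alpha> x) {0..<Suc n}) p) = p"
      by (auto simp: pext_def PiE_def extensional_def fun_eq_iff)
  next
    fix p assume "p \<in> S \<times> PiE {0..<n} (\<lambda>_. S)"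
    then show "(\<lambda>(x,\<alpha>). restrict (pext n x \<alpha> x) {0..<Suc n}) p \<in> PiE {0..<Suc n} (\<lambda>_. S)"
      by (auto simp: pext_def PiE_def Pi_def)
  next
    fix \<beta> assume "\<beta> \<in> PiE {0..<Suc n} (\<lambda>_. S)"
    then show "(\<lambda>(x,\<alpha>). restrict (pext n x \<alpha> x) {0..<Suc n}) (\<beta> 0, \<lambda>k\<in>{0..<n}. \<beta> (Suc k)) = \<beta>"
      by (auto simp: pext_def PiE_def extensional_def fun_eq_iff)
    show "(\<beta> 0, \<lambda>k\<in>{0..<n}. \<beta> (Suc k)) \<in> S \<times> PiE {0..<n} (\<lambda>_. S)"
      using \<open>\<beta> \<in> _\<close> by auto
  qed auto
  finally show ?thesis unfolding r .
qed

definition pha :: "nat \<Rightarrow> int \<Rightarrow> complex" where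
  "pha n z = cis (2 * pi * of_int z / real n)"

lemma pha_add: "pha n a * pha n b = pha n (a + b)"
  by (simp add: pha_def cis_mult add_divide_distrib algebra_simps)

lemma pha_cnj: "cnj (pha n a) = pha n (- a)"
  by (simp add: pha_def cis_cnj)

lemma pha_0[simp]: "pha n 0 = 1"
  by (simp add: pha_def)

lemma norm_pha[simp]: "norm (pha n a) = 1"
  by (simp add: pha_def)

lemma pha_pow: "pha n a ^ m = pha n (int m * a)"
  by (simp add: pha_def Complex.DeMoivre algebra_simps)

lemma root_unity_pow: "root_unity n ^ e = pha n (int e)"
  by (simp add: root_unity_def pha_def Complex.DeMoivre algebra_simps)

lemma pha_dvd: "n > 0 \<Longrightarrow> int n dvd a \<Longrightarrow> pha n a = 1"
proof -
  assume "n > 0" "int n dvd a"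
  then obtain k where "a = int n * k" by (auto elim: dvdE)
  then have "2 * pi * of_int a / real n = 2 * pi * of_int k" using \<open>n > 0\<close> by simp
  then show ?thesis unfolding pha_def by simp
qed

lemma pha_mod: "n > 0 \<Longrightarrow> a mod int n = b mod int n \<Longrightarrow> pha n a = pha n b"
proof -
  assume n: "n > 0" and e: "a mod int n = b mod int n"
  then have "int n dvd a - b" by (simp add: mod_eq_dvd_iff)
  then have "pha n (a - b) = 1" using n by (intro pha_dvd)
  then have "pha n (a - b) * pha n b = pha n b" by simp
  then show ?thesis by (simp add: pha_add)
qed

lemma pha_eq_1: "n > 0 \<Longrightarrow> pha n a = 1 \<Longrightarrow> int n dvd a"
proof -
  assume n: "n > 0" and h: "pha n a = 1"
  then have "cos (2 * pi * of_int a / real n) = 1"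
    unfolding pha_def by (simp add: complex_eq_iff)
  then obtain k :: int where k: "2 * pi * of_int a / real n = k * 2 * pi"
    by (auto simp: cos_one_2pi_int)
  then have "real_of_int a = real n * of_int k" using n by (simp add: field_simps)
  then have "a = int n * k" by (metis of_int_eq_iff of_int_mult of_int_of_nat_eq)
  then show ?thesis by simp
qed

lemma char_sum:
  assumes "n > 0"
  shows "(\<Sum>u<n. pha n (int u * g)) = (if int n dvd g then of_nat n else 0)"
proof (cases "int n dvd g")
  case True
  then have "\<And>u. pha n (int u * g) = 1" using assms by (intro pha_dvd) auto
  then show ?thesis using True by simp
next
  case False
  define w where "w = pha n g"
  have w1: "w \<noteq> 1" using False pha_eq_1[OF assms] by (auto simp: w_def)
  have "(\<Sum>u<n. pha n (int u * g)) = (\<Sum>u<n. w ^ u)" by (simp add: w_def pha_pow)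
  also have "\<dots> = (w ^ n - 1) / (w - 1)" using w1 by (rule geometric_sum)
  also have "w ^ n = 1" unfolding w_def pha_pow using assms by (intro pha_dvd) auto
  finally show ?thesis using False by simp
qed

lemma char_sum':
  assumes "n > 0"
  shows "(\<Sum>u\<in>{0..<n}. pha n (int u * g)) = (if int n dvd g then of_nat n else 0)"
  using char_sum[OF assms] by (simp add: lessThan_atLeast0)

lemma prod_mset_image_count:
  assumes "finite S" "set_mset A \<subseteq> S"
  shows "prod_mset (image_mset F A) = (\<Prod>q\<in>S. F q ^ count A q)"
  using assms(2)
proof (induction A)
  case empty
  then show ?case by simp
next
  case (add x A)
  then have xS: "x \<in> S" and AS: "set_mset A \<subseteq> S" by auto
  have "(\<Prod>q\<in>S. F q ^ count (add_mset x A) q) = (\<Prod>q\<in>S. F q ^ count A q * (if q = x then F q else 1))"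
    by (intro prod.cong refl) (auto simp: mult.commute)
  also have "\<dots> = (\<Prod>q\<in>S. F q ^ count A q) * F x"
    using assms(1) xS by (simp add: prod.distrib)
  finally show ?case using add.IH[OF AS] by (simp add: mult.commute)
qed

lemma prod_upt_mset: "(\<Prod>k<p. F (g k)) = prod_mset (image_mset F (image_mset g (mset [0..<p])))"
  by (simp add: prod_unfold_prod_mset lessThan_atLeast0 image_mset.compositionality comp_def)

definition xi :: "nat \<Rightarrow> nat \<Rightarrow> (nat \<times> nat \<Rightarrow> complex) \<Rightarrow> nat \<times> nat \<Rightarrow> nat \<times> nat \<Rightarrow> nat \<times> nat \<Rightarrow> complex" where
  "xi M N Q a b \<gamma> = Hmat M N Q a \<gamma> / Hmat M N Q b \<gamma>"

lemma Umat_xi: "Umat M N Q a b = (\<lambda>x y. (xi M N Q a b x / of_nat (M*N)) * cnj (xi M N Q a b y))"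
  by (simp add: Umat_def xi_def fun_eq_iff)

lemma integrand_expand:
  assumes "0 < p"
  shows "mtrace (idx M N) (mlistprod (idx M N) (map (\<lambda>k. Umat M N Q (\<alpha> k) (\<beta> k)) [0..<p])) / of_nat (M * N)
   = (\<Sum>\<gamma>\<in>PiE {0..<p} (\<lambda>_. idx M N). \<Prod>k<p. cnj (xi M N Q (\<alpha> k) (\<beta> k) (\<gamma> k)) *
          xi M N Q (\<alpha> ((k+1) mod p)) (\<beta> ((k+1) mod p)) (\<gamma> k)) / of_nat (M*N) ^ (p+1)"
proof -
  define K where "K = (of_nat (M*N) :: complex)"
  have "mtrace (idx M N) (mlistprod (idx M N) (map (\<lambda>k. Umat M N Q (\<alpha> k) (\<beta> k)) [0..<p]))
      = (\<Prod>k<p. \<Sum>z\<in>idx M N. cnj (xi M N Q (\<alpha> k) (\<beta> k) z) * (xi M N Q (\<alpha> ((k+1) mod p)) (\<beta> ((k+1) mod p)) z / K))"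
    unfolding Umat_xi K_def by (rule trace_rank1[OF finite_idx assms])
  also have "\<dots> = (\<Prod>k<p. (\<Sum>z\<in>idx M N. cnj (xi M N Q (\<alpha> k) (\<beta> k) z) * xi M N Q (\<alpha> ((k+1) mod p)) (\<beta> ((k+1) mod p)) z) / K)"
    by (intro prod.cong refl) (simp add: sum_divide_distrib)
  also have "\<dots> = (\<Prod>k<p. (\<Sum>z\<in>idx M N. cnj (xi M N Q (\<alpha> k) (\<beta> k) z) * xi M N Q (\<alpha> ((k+1) mod p)) (\<beta> ((k+1) mod p)) z)) / K ^ p"
    by (simp add: prod_dividef)
  also have "(\<Prod>k<p. (\<Sum>z\<in>idx M N. cnj (xi M N Q (\<alpha> k) (\<beta> k) z) * xi M N Q (\<alpha> ((k+1) mod p)) (\<beta> ((k+1) mod p)) z))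
     = (\<Sum>\<gamma>\<in>PiE {..<p} (\<lambda>_. idx M N). \<Prod>k<p. cnj (xi M N Q (\<alpha> k) (\<beta> k) (\<gamma> k)) *
          xi M N Q (\<alpha> ((k+1) mod p)) (\<beta> ((k+1) mod p)) (\<gamma> k))"
    by (rule prod_sum_PiE) auto
  finally show ?thesis by (simp add: K_def lessThan_atLeast0 power_Suc mult.commute)
qed

lemma Hmat_eq: "Hmat M N Q (s,u) (j,b) = Q (s,b) * pha M (int s * int j) * pha N (int u * int b)"
  unfolding Hmat_def root_unity_pow by simp

lemma div_unit: "cmod w = 1 \<Longrightarrow> a / w = a * cnj w"
  by (subst complex_div_cnj) simp

lemma xi_circ:
  assumes "cmod (Q (t,b)) = 1"
  shows "xi M N Q (s,u) (t,v) (j,b) = Q (s,b) * cnj (Q (t,b)) * pha M (int s * int j - int t * int j) * pha N (int u * int b - int v * int b)"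
proof -
  have n: "cmod (Q (t,b) * pha M (int t * int j) * pha N (int v * int b)) = 1"
    using assms by (simp add: norm_mult)
  have "xi M N Q (s,u) (t,v) (j,b) = Q (s,b) * pha M (int s * int j) * pha N (int u * int b) *
          (cnj (Q (t,b)) * pha M (- (int t * int j)) * pha N (- (int v * int b)))"
    unfolding xi_def Hmat_eq div_unit[OF n] by (simp add: pha_cnj)
  also have "\<dots> = Q (s,b) * cnj (Q (t,b)) * (pha M (int s * int j) * pha M (- (int t * int j))) *
          (pha N (int u * int b) * pha N (- (int v * int b)))"
    by (simp add: mult_ac)
  finally show ?thesis by (simp add: pha_add)
qed

lemma factor_circ:
  assumes "cmod (Q (t,b)) = 1" "cmod (Q (t',b)) = 1"
  shows "cnj (xi M N Q (s,u) (t,v) (j,b)) * xi M N Q (s',u') (t',v') (j,b)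
   = (Q (t,b) * Q (s',b)) * (cnj (Q (s,b)) * cnj (Q (t',b))) *
     (pha M (int j * (int s' - int t' - int s + int t)) * pha N (int b * (int u' - int v' - int u + int v)))"
proof -
  have "cnj (xi M N Q (s,u) (t,v) (j,b)) * xi M N Q (s',u') (t',v') (j,b)
      = (Q (t,b) * Q (s',b)) * (cnj (Q (s,b)) * cnj (Q (t',b))) *
        ((pha M (- (int s * int j - int t * int j)) * pha M (int s' * int j - int t' * int j)) *
         (pha N (- (int u * int b - int v * int b)) * pha N (int u' * int b - int v' * int b)))"
    unfolding xi_circ[where Q=Q and t=t and b=b, OF assms(1)] xi_circ[where Q=Q and t=t' and b=b, OF assms(2)]
    by (simp add: pha_cnj mult_ac)
  also have "\<dots> = (Q (t,b) * Q (s',b)) * (cnj (Q (s,b)) * cnj (Q (t',b))) *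
     (pha M (int j * (int s' - int t' - int s + int t)) * pha N (int b * (int u' - int v' - int u + int v)))"
    unfolding pha_add by (simp add: algebra_simps)
  finally show ?thesis .
qed

definition dM :: "nat \<Rightarrow> (nat \<Rightarrow> nat \<times> nat) \<Rightarrow> (nat \<Rightarrow> nat \<times> nat) \<Rightarrow> nat \<Rightarrow> int" where
  "dM p \<alpha> \<beta> k = int (fst (\<alpha> ((k+1) mod p))) - int (fst (\<beta> ((k+1) mod p))) - int (fst (\<alpha> k)) + int (fst (\<beta> k))"
definition dN :: "nat \<Rightarrow> (nat \<Rightarrow> nat \<times> nat) \<Rightarrow> (nat \<Rightarrow> nat \<times> nat) \<Rightarrow> nat \<Rightarrow> int" where
  "dN p \<alpha> \<beta> k = int (snd (\<alpha> ((k+1) mod p))) - int (snd (\<beta> ((k+1) mod p))) - int (snd (\<alpha> k)) + int (snd (\<beta> k))"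
definition Apos :: "nat \<Rightarrow> (nat \<Rightarrow> nat) \<Rightarrow> (nat \<Rightarrow> nat) \<Rightarrow> (nat \<Rightarrow> nat) \<Rightarrow> (nat \<times> nat) multiset" where
  "Apos p s t b = image_mset (\<lambda>k. (t k, b k)) (mset [0..<p]) + image_mset (\<lambda>k. (s ((k+1) mod p), b k)) (mset [0..<p])"
definition Aneg :: "nat \<Rightarrow> (nat \<Rightarrow> nat) \<Rightarrow> (nat \<Rightarrow> nat) \<Rightarrow> (nat \<Rightarrow> nat) \<Rightarrow> (nat \<times> nat) multiset" where
  "Aneg p s t b = image_mset (\<lambda>k. (s k, b k)) (mset [0..<p]) + image_mset (\<lambda>k. (t ((k+1) mod p), b k)) (mset [0..<p])"
definition PH :: "nat \<Rightarrow> nat \<Rightarrow> nat \<Rightarrow> (nat \<Rightarrow> nat \<times> nat) \<Rightarrow> (nat \<Rightarrow> nat \<times> nat) \<Rightarrow> (nat \<Rightarrow> nat \<times> nat) \<Rightarrow> complex" where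
  "PH M N p \<alpha> \<beta> \<gamma> = (\<Prod>k<p. pha M (int (fst (\<gamma> k)) * dM p \<alpha> \<beta> k) * pha N (int (snd (\<gamma> k)) * dN p \<alpha> \<beta> k))"

lemma prod_circ:
  assumes Q: "\<forall>q\<in>idx M N. cmod (Q q) = 1" and p: "0 < p"
    and \<alpha>: "\<alpha> \<in> idxp M N p" and \<beta>: "\<beta> \<in> idxp M N p" and \<gamma>: "\<gamma> \<in> PiE {0..<p} (\<lambda>_. idx M N)"
  shows "(\<Prod>k<p. cnj (xi M N Q (\<alpha> k) (\<beta> k) (\<gamma> k)) * xi M N Q (\<alpha> ((k+1) mod p)) (\<beta> ((k+1) mod p)) (\<gamma> k))
    = PH M N p \<alpha> \<beta> \<gamma> * (\<Prod>q\<in>idx M N. Q q ^ count (Apos p (fst \<circ> \<alpha>) (fst \<circ> \<beta>) (snd \<circ> \<gamma>)) q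
                              * cnj (Q q) ^ count (Aneg p (fst \<circ> \<alpha>) (fst \<circ> \<beta>) (snd \<circ> \<gamma>)) q)"
proof -
  let ?s = "fst \<circ> \<alpha>" and ?t = "fst \<circ> \<beta>" and ?b = "snd \<circ> \<gamma>"
  have mem: "k < p \<Longrightarrow> \<alpha> k \<in> idx M N \<and> \<beta> k \<in> idx M N \<and> \<gamma> k \<in> idx M N" for k
    using \<alpha> \<beta> \<gamma> by (auto simp: idxp_def)
  have kp: "k < p \<Longrightarrow> (k+1) mod p < p" for k using p by simp
  have fac: "cnj (xi M N Q (\<alpha> k) (\<beta> k) (\<gamma> k)) * xi M N Q (\<alpha> ((k+1) mod p)) (\<beta> ((k+1) mod p)) (\<gamma> k)
     = (Q (?t k, ?b k) * Q (?s ((k+1) mod p), ?b k)) * (cnj (Q (?s k, ?b k)) * cnj (Q (?t ((k+1) mod p), ?b k))) *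
       (pha M (int (fst (\<gamma> k)) * dM p \<alpha> \<beta> k) * pha N (int (snd (\<gamma> k)) * dN p \<alpha> \<beta> k))" if k: "k < p" for k
  proof -
    have m1: "(fst (\<beta> k), snd (\<gamma> k)) \<in> idx M N" and m2: "(fst (\<beta> ((k+1) mod p)), snd (\<gamma> k)) \<in> idx M N"
      using mem[OF k] mem[OF kp[OF k]] by (auto simp: idx_def mem_Times_iff)
    show ?thesis
      using factor_circ[of Q "fst (\<beta> k)" "snd (\<gamma> k)" "fst (\<beta> ((k+1) mod p))" M N "fst (\<alpha> k)" "snd (\<alpha> k)" "snd (\<beta> k)"
          "fst (\<gamma> k)" "fst (\<alpha> ((k+1) mod p))" "snd (\<alpha> ((k+1) mod p))" "snd (\<beta> ((k+1) mod p))"] Q m1 m2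
      by (simp add: dM_def dN_def)
  qed
  have "(\<Prod>k<p. cnj (xi M N Q (\<alpha> k) (\<beta> k) (\<gamma> k)) * xi M N Q (\<alpha> ((k+1) mod p)) (\<beta> ((k+1) mod p)) (\<gamma> k))
     = (\<Prod>k<p. (Q (?t k, ?b k) * Q (?s ((k+1) mod p), ?b k)) * (cnj (Q (?s k, ?b k)) * cnj (Q (?t ((k+1) mod p), ?b k))) *
       (pha M (int (fst (\<gamma> k)) * dM p \<alpha> \<beta> k) * pha N (int (snd (\<gamma> k)) * dN p \<alpha> \<beta> k)))"
    by (intro prod.cong refl fac) simp
  also have "\<dots> = ((\<Prod>k<p. Q (?t k, ?b k)) * (\<Prod>k<p. Q (?s ((k+1) mod p), ?b k))) *
                  ((\<Prod>k<p. cnj (Q (?s k, ?b k))) * (\<Prod>k<p. cnj (Q (?t ((k+1) mod p), ?b k)))) * PH M N p \<alpha> \<beta> \<gamma>"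
    by (simp add: prod.distrib PH_def)
  also have "(\<Prod>k<p. Q (?t k, ?b k)) * (\<Prod>k<p. Q (?s ((k+1) mod p), ?b k)) = prod_mset (image_mset Q (Apos p ?s ?t ?b))"
    unfolding Apos_def image_mset_union prod_mset.union
    by (subst (1 2) prod_upt_mset[where F=Q]) simp
  also have "\<dots> = (\<Prod>q\<in>idx M N. Q q ^ count (Apos p ?s ?t ?b) q)"
  proof (rule prod_mset_image_count[OF finite_idx])
    show "set_mset (Apos p ?s ?t ?b) \<subseteq> idx M N"
      using mem kp by (auto simp: Apos_def idx_def mem_Times_iff)
  qed
  also have "(\<Prod>k<p. cnj (Q (?s k, ?b k))) * (\<Prod>k<p. cnj (Q (?t ((k+1) mod p), ?b k))) = prod_mset (image_mset (\<lambda>q. cnj (Q q)) (Aneg p ?s ?t ?b))"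
    unfolding Aneg_def image_mset_union prod_mset.union
    by (subst (1 2) prod_upt_mset[where F="\<lambda>q. cnj (Q q)"]) simp
  also have "\<dots> = (\<Prod>q\<in>idx M N. cnj (Q q) ^ count (Aneg p ?s ?t ?b) q)"
  proof (rule prod_mset_image_count[OF finite_idx])
    show "set_mset (Aneg p ?s ?t ?b) \<subseteq> idx M N"
      using mem kp by (auto simp: Aneg_def idx_def mem_Times_iff)
  qed
  finally have "(\<Prod>k<p. cnj (xi M N Q (\<alpha> k) (\<beta> k) (\<gamma> k)) * xi M N Q (\<alpha> ((k+1) mod p)) (\<beta> ((k+1) mod p)) (\<gamma> k)) =
    (\<Prod>q\<in>idx M N. Q q ^ count (Apos p ?s ?t ?b) q) * (\<Prod>q\<in>idx M N. cnj (Q q) ^ count (Aneg p ?s ?t ?b) q) * PH M N p \<alpha> \<beta> \<gamma>" .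
  then show ?thesis by (simp only: prod.distrib mult_ac)
qed

lemma meas_cnj: "f \<in> borel_measurable M \<Longrightarrow> (\<lambda>x. cnj (f x)) \<in> borel_measurable M"
  by (rule measurable_compose[OF _ borel_measurable_continuous_onI[OF continuous_on_cnj[OF continuous_on_id]]])

lemma meas_Qq: "q \<in> idx M N \<Longrightarrow> (\<lambda>Q. Q q) \<in> borel_measurable (torus_haar M N)"
proof -
  assume q: "q \<in> idx M N"
  have "(\<lambda>Q. Q q) \<in> measurable (PiM (idx M N) (\<lambda>_. circle_haar)) circle_haar"
    using q by (rule measurable_component_singleton)
  moreover have "measurable (PiM (idx M N) (\<lambda>_. circle_haar)) circle_haar = measurable (PiM (idx M N) (\<lambda>_. circle_haar)) borel"
    by (rule measurable_cong_sets) (simp_all add: circle_haar_def)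
  ultimately show ?thesis unfolding torus_haar_def by simp
qed

lemma meas_xi:
  assumes "a \<in> idx M N" "b \<in> idx M N" "g \<in> idx M N"
  shows "(\<lambda>Q. xi M N Q a b g) \<in> borel_measurable (torus_haar M N)"
proof -
  obtain s u t v j c where e: "a = (s,u)" "b = (t,v)" "g = (j,c)" by (cases a, cases b, cases g) auto
  have m1: "(s,c) \<in> idx M N" "(t,c) \<in> idx M N" using assms e by (auto simp: idx_def)
  show ?thesis unfolding e xi_def Hmat_eq
    by (intro borel_measurable_divide borel_measurable_times meas_Qq m1 borel_measurable_const)
qed

lemma meas_integrand:
  assumes "\<alpha> \<in> idxp M N p" "\<beta> \<in> idxp M N p" "0 < p"
  shows "(\<lambda>Q. (\<Sum>\<gamma>\<in>PiE {0..<p} (\<lambda>_. idx M N). \<Prod>k<p. cnj (xi M N Q (\<alpha> k) (\<beta> k) (\<gamma> k)) *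
          xi M N Q (\<alpha> ((k+1) mod p)) (\<beta> ((k+1) mod p)) (\<gamma> k)) / of_nat (M*N) ^ (p+1)) \<in> borel_measurable (torus_haar M N)"
proof -
  have mem: "k < p \<Longrightarrow> \<alpha> k \<in> idx M N \<and> \<beta> k \<in> idx M N" for k using assms by (auto simp: idxp_def)
  have kp: "k < p \<Longrightarrow> \<alpha> (Suc k mod p) \<in> idx M N \<and> \<beta> (Suc k mod p) \<in> idx M N" for k
    using assms mem[of "Suc k mod p"] by simp
  show ?thesis
    by (intro borel_measurable_divide borel_measurable_const borel_measurable_sum borel_measurable_prod
          borel_measurable_times meas_cnj meas_xi) (auto dest: mem kp simp: PiE_iff)
qed

lemma mono_count_eq:
  assumes "set_mset A \<subseteq> S" "set_mset B \<subseteq> S"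
  shows "(\<forall>q\<in>S. count A q = count B q) \<longleftrightarrow> A = B"
  using assms by (auto simp: multiset_eq_iff) (metis count_inI in_mono)

lemma Tmat_formula:
  assumes \<alpha>: "\<alpha> \<in> idxp M N p" and \<beta>: "\<beta> \<in> idxp M N p" and p: "0 < p"
  shows "Tmat M N p \<alpha> \<beta> = (\<Sum>\<gamma>\<in>PiE {0..<p} (\<lambda>_. idx M N). PH M N p \<alpha> \<beta> \<gamma> *
           (if Apos p (fst \<circ> \<alpha>) (fst \<circ> \<beta>) (snd \<circ> \<gamma>) = Aneg p (fst \<circ> \<alpha>) (fst \<circ> \<beta>) (snd \<circ> \<gamma>) then 1 else 0))
           / of_nat (M*N) ^ (p+1)"
proof -
  let ?I = "PiE {0..<p} (\<lambda>_. idx M N)"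
  let ?mono = "\<lambda>\<gamma> Q. \<Prod>q\<in>idx M N. Q q ^ count (Apos p (fst \<circ> \<alpha>) (fst \<circ> \<beta>) (snd \<circ> \<gamma>)) q
                              * cnj (Q q) ^ count (Aneg p (fst \<circ> \<alpha>) (fst \<circ> \<beta>) (snd \<circ> \<gamma>)) q"
  have "Tmat M N p \<alpha> \<beta> = integral\<^sup>L (torus_haar M N) (\<lambda>Q. (\<Sum>\<gamma>\<in>?I. \<Prod>k<p. cnj (xi M N Q (\<alpha> k) (\<beta> k) (\<gamma> k)) *
          xi M N Q (\<alpha> ((k+1) mod p)) (\<beta> ((k+1) mod p)) (\<gamma> k)) / of_nat (M*N) ^ (p+1))"
    unfolding Tmat_def by (intro Bochner_Integration.integral_cong refl integrand_expand p)
  also have "\<dots> = integral\<^sup>L (torus_haar M N) (\<lambda>Q. (\<Sum>\<gamma>\<in>?I. PH M N p \<alpha> \<beta> \<gamma> * ?mono \<gamma> Q) / of_nat (M*N) ^ (p+1))"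
  proof (rule integral_cong_AE)
    show "AE Q in torus_haar M N. (\<Sum>\<gamma>\<in>?I. \<Prod>k<p. cnj (xi M N Q (\<alpha> k) (\<beta> k) (\<gamma> k)) *
          xi M N Q (\<alpha> ((k+1) mod p)) (\<beta> ((k+1) mod p)) (\<gamma> k)) / of_nat (M*N) ^ (p+1)
        = (\<Sum>\<gamma>\<in>?I. PH M N p \<alpha> \<beta> \<gamma> * ?mono \<gamma> Q) / of_nat (M*N) ^ (p+1)"
      using torus_AE[of M N]
    proof eventually_elim
      case (elim Q)
      show ?case by (intro arg_cong2[where f="(/)"] sum.cong refl prod_circ elim p \<alpha> \<beta>)
    qed
    show "(\<lambda>Q. (\<Sum>\<gamma>\<in>?I. PH M N p \<alpha> \<beta> \<gamma> * ?mono \<gamma> Q) / of_nat (M*N) ^ (p+1)) \<in> borel_measurable (torus_haar M N)"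
      by (intro borel_measurable_divide borel_measurable_const borel_measurable_sum borel_measurable_prod
          borel_measurable_times meas_cnj meas_Qq borel_measurable_power)
  qed (rule meas_integrand[OF \<alpha> \<beta> p])
  also have "\<dots> = (\<Sum>\<gamma>\<in>?I. PH M N p \<alpha> \<beta> \<gamma> * integral\<^sup>L (torus_haar M N) (?mono \<gamma>)) / of_nat (M*N) ^ (p+1)"
    by (simp add: torus_integrable)
  also have "\<dots> = (\<Sum>\<gamma>\<in>?I. PH M N p \<alpha> \<beta> \<gamma> *
           (if Apos p (fst \<circ> \<alpha>) (fst \<circ> \<beta>) (snd \<circ> \<gamma>) = Aneg p (fst \<circ> \<alpha>) (fst \<circ> \<beta>) (snd \<circ> \<gamma>) then 1 else 0))
           / of_nat (M*N) ^ (p+1)"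
  proof (intro arg_cong2[where f="(/)"] sum.cong refl arg_cong2[where f="(*)"])
    fix \<gamma> assume \<gamma>: "\<gamma> \<in> ?I"
    have mem: "k < p \<Longrightarrow> \<alpha> k \<in> idx M N \<and> \<beta> k \<in> idx M N \<and> \<gamma> k \<in> idx M N" for k
      using \<alpha> \<beta> \<gamma> by (auto simp: idxp_def)
    have kp: "k < p \<Longrightarrow> (k+1) mod p < p" for k using p by simp
    have s1: "set_mset (Apos p (fst \<circ> \<alpha>) (fst \<circ> \<beta>) (snd \<circ> \<gamma>)) \<subseteq> idx M N"
      using mem kp by (auto simp: Apos_def idx_def mem_Times_iff)
    have s2: "set_mset (Aneg p (fst \<circ> \<alpha>) (fst \<circ> \<beta>) (snd \<circ> \<gamma>)) \<subseteq> idx M N"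
      using mem kp by (auto simp: Aneg_def idx_def mem_Times_iff)
    show "integral\<^sup>L (torus_haar M N) (?mono \<gamma>) = (if Apos p (fst \<circ> \<alpha>) (fst \<circ> \<beta>) (snd \<circ> \<gamma>) = Aneg p (fst \<circ> \<alpha>) (fst \<circ> \<beta>) (snd \<circ> \<gamma>) then 1 else 0)"
      unfolding torus_moment mono_count_eq[OF s1 s2] ..
  qed
  finally show ?thesis .
qed

lemma split_PiE:
  "(\<Sum>\<gamma>\<in>PiE I (\<lambda>i. A i \<times> B i). f \<gamma>) = (\<Sum>j\<in>PiE I A. \<Sum>b\<in>PiE I B. f (\<lambda>i\<in>I. (j i, b i)))"
proof -
  have "(\<Sum>j\<in>PiE I A. \<Sum>b\<in>PiE I B. f (\<lambda>i\<in>I. (j i, b i))) = (\<Sum>q\<in>PiE I A \<times> PiE I B. f (\<lambda>i\<in>I. (fst q i, snd q i)))"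
    by (simp add: sum.cartesian_product split_def)
  also have "\<dots> = (\<Sum>\<gamma>\<in>PiE I (\<lambda>i. A i \<times> B i). f \<gamma>)"
  proof (rule sum.reindex_bij_witness[where i="\<lambda>\<gamma>. (\<lambda>i\<in>I. fst (\<gamma> i), \<lambda>i\<in>I. snd (\<gamma> i))" and j="\<lambda>q. (\<lambda>i\<in>I. (fst q i, snd q i))"])
    fix q assume "q \<in> PiE I A \<times> PiE I B"
    then show "(\<lambda>i\<in>I. fst ((\<lambda>i\<in>I. (fst q i, snd q i)) i), \<lambda>i\<in>I. snd ((\<lambda>i\<in>I. (fst q i, snd q i)) i)) = q"
      by (cases q) (auto simp: PiE_def extensional_def fun_eq_iff)
  next
    fix \<gamma> assume "\<gamma> \<in> PiE I (\<lambda>i. A i \<times> B i)"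
    then show "(\<lambda>i\<in>I. (fst ((\<lambda>i\<in>I. fst (\<gamma> i), \<lambda>i\<in>I. snd (\<gamma> i))) i, snd ((\<lambda>i\<in>I. fst (\<gamma> i), \<lambda>i\<in>I. snd (\<gamma> i))) i)) = \<gamma>"
      by (auto simp: PiE_def extensional_def fun_eq_iff)
  qed (auto simp: PiE_def Pi_def mem_Times_iff)
  finally show ?thesis ..
qed

lemma split_PiE2:
  "(\<Sum>A\<in>PiE I (\<lambda>_. PiE J (\<lambda>_. A0 \<times> B0)). f A) =
   (\<Sum>S\<in>PiE I (\<lambda>_. PiE J (\<lambda>_. A0)). \<Sum>U\<in>PiE I (\<lambda>_. PiE J (\<lambda>_. B0)). f (\<lambda>x\<in>I. \<lambda>k\<in>J. (S x k, U x k)))"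
proof -
  have "(\<Sum>S\<in>PiE I (\<lambda>_. PiE J (\<lambda>_. A0)). \<Sum>U\<in>PiE I (\<lambda>_. PiE J (\<lambda>_. B0)). f (\<lambda>x\<in>I. \<lambda>k\<in>J. (S x k, U x k)))
     = (\<Sum>q\<in>PiE I (\<lambda>_. PiE J (\<lambda>_. A0)) \<times> PiE I (\<lambda>_. PiE J (\<lambda>_. B0)). f (\<lambda>x\<in>I. \<lambda>k\<in>J. (fst q x k, snd q x k)))"
    by (simp add: sum.cartesian_product split_def)
  also have "\<dots> = (\<Sum>A\<in>PiE I (\<lambda>_. PiE J (\<lambda>_. A0 \<times> B0)). f A)"
  proof (rule sum.reindex_bij_witness[where i="\<lambda>A. (\<lambda>x\<in>I. \<lambda>k\<in>J. fst (A x k), \<lambda>x\<in>I. \<lambda>k\<in>J. snd (A x k))"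
        and j="\<lambda>q. (\<lambda>x\<in>I. \<lambda>k\<in>J. (fst q x k, snd q x k))"])
    fix q assume q: "q \<in> PiE I (\<lambda>_. PiE J (\<lambda>_. A0)) \<times> PiE I (\<lambda>_. PiE J (\<lambda>_. B0))"
    obtain S U where qe: "q = (S, U)" by (cases q)
    have S: "S \<in> PiE I (\<lambda>_. PiE J (\<lambda>_. A0))" and U: "U \<in> PiE I (\<lambda>_. PiE J (\<lambda>_. B0))" using q qe by auto
    have eS: "(\<lambda>x\<in>I. \<lambda>k\<in>J. S x k) x k = S x k" for x k
      using PiE_arb[OF S, of x] PiE_arb[OF PiE_mem[OF S], of x k] by (cases "x \<in> I") auto
    have eU: "(\<lambda>x\<in>I. \<lambda>k\<in>J. U x k) x k = U x k" for x k
      using PiE_arb[OF U, of x] PiE_arb[OF PiE_mem[OF U], of x k] by (cases "x \<in> I") auto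
    have "(\<lambda>x\<in>I. \<lambda>k\<in>J. S x k) = S" "(\<lambda>x\<in>I. \<lambda>k\<in>J. U x k) = U"
      by (intro ext eS, intro ext eU)
    then show "(\<lambda>A. (\<lambda>x\<in>I. \<lambda>k\<in>J. fst (A x k), \<lambda>x\<in>I. \<lambda>k\<in>J. snd (A x k))) ((\<lambda>q. (\<lambda>x\<in>I. \<lambda>k\<in>J. (fst q x k, snd q x k))) q) = q"
    proof -
      have "(\<lambda>x\<in>I. \<lambda>k\<in>J. fst ((\<lambda>x\<in>I. \<lambda>k\<in>J. (S x k, U x k)) x k)) = (\<lambda>x\<in>I. \<lambda>k\<in>J. S x k)"
           "(\<lambda>x\<in>I. \<lambda>k\<in>J. snd ((\<lambda>x\<in>I. \<lambda>k\<in>J. (S x k, U x k)) x k)) = (\<lambda>x\<in>I. \<lambda>k\<in>J. U x k)"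
        by (intro restrict_ext; simp)+
      then show ?thesis unfolding qe using \<open>(\<lambda>x\<in>I. \<lambda>k\<in>J. S x k) = S\<close> \<open>(\<lambda>x\<in>I. \<lambda>k\<in>J. U x k) = U\<close>
        by simp
    qed
  next
    fix A assume A: "A \<in> PiE I (\<lambda>_. PiE J (\<lambda>_. A0 \<times> B0))"
    have eA: "(\<lambda>q. (\<lambda>x\<in>I. \<lambda>k\<in>J. (fst q x k, snd q x k))) ((\<lambda>A. (\<lambda>x\<in>I. \<lambda>k\<in>J. fst (A x k), \<lambda>x\<in>I. \<lambda>k\<in>J. snd (A x k))) A) x k = A x k" for x k
      using PiE_arb[OF A, of x] PiE_arb[OF PiE_mem[OF A], of x k] by (cases "x \<in> I") auto
    show "(\<lambda>q. (\<lambda>x\<in>I. \<lambda>k\<in>J. (fst q x k, snd q x k))) ((\<lambda>A. (\<lambda>x\<in>I. \<lambda>k\<in>J. fst (A x k), \<lambda>x\<in>I. \<lambda>k\<in>J. snd (A x k))) A) = A"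
      by (intro ext eA)
  qed (auto simp: PiE_def Pi_def mem_Times_iff extensional_def)
  finally show ?thesis ..
qed

lemma prod_if_const:
  assumes "finite K"
  shows "(\<Prod>k\<in>K. if P k then c else 0) = (if \<forall>k\<in>K. P k then c ^ card K else (0::'a::comm_semiring_1))"
proof (cases "\<forall>k\<in>K. P k")
  case True
  then show ?thesis by simp
next
  case False
  then obtain k where "k \<in> K" "\<not> P k" by auto
  then show ?thesis using assms False by (auto intro!: prod_zero)
qed

definition ds :: "nat \<Rightarrow> (nat \<Rightarrow> nat) \<Rightarrow> (nat \<Rightarrow> nat) \<Rightarrow> nat \<Rightarrow> int" where
  "ds p s t k = int (s ((k+1) mod p)) - int (t ((k+1) mod p)) - int (s k) + int (t k)"

definition T2 :: "nat \<Rightarrow> nat \<Rightarrow> nat \<Rightarrow> (nat \<Rightarrow> nat) \<Rightarrow> (nat \<Rightarrow> nat) \<Rightarrow> (nat \<Rightarrow> nat) \<Rightarrow> (nat \<Rightarrow> nat) \<Rightarrow> complex" where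
  "T2 M N p s u t v = (if \<forall>k<p. int M dvd ds p s t k then of_nat M ^ p else 0) *
     (\<Sum>b\<in>PiE {0..<p} (\<lambda>_. {0..<N}). (\<Prod>k<p. pha N (int (b k) * ds p u v k)) *
        (if Apos p s t b = Aneg p s t b then 1 else 0)) / of_nat (M*N) ^ (p+1)"

lemma Apos_cong:
  assumes "\<And>k. k < p \<Longrightarrow> s k = s' k" "\<And>k. k < p \<Longrightarrow> t k = t' k" "\<And>k. k < p \<Longrightarrow> b k = b' k"
  shows "Apos p s t b = Apos p s' t' b'" "Aneg p s t b = Aneg p s' t' b'"
proof -
  have kp: "k < p \<Longrightarrow> (k+1) mod p < p" for k by simp
  show "Apos p s t b = Apos p s' t' b'" unfolding Apos_def
    using assms kp by (intro arg_cong2[where f="(+)"] image_mset_cong) auto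
  show "Aneg p s t b = Aneg p s' t' b'" unfolding Aneg_def
    using assms kp by (intro arg_cong2[where f="(+)"] image_mset_cong) auto
qed

lemma T2_eq:
  assumes \<alpha>: "\<alpha> \<in> idxp M N p" and \<beta>: "\<beta> \<in> idxp M N p" and p: "0 < p" and M: "0 < M"
  shows "Tmat M N p \<alpha> \<beta> = T2 M N p (\<lambda>k\<in>{0..<p}. fst (\<alpha> k)) (\<lambda>k\<in>{0..<p}. snd (\<alpha> k))
                                    (\<lambda>k\<in>{0..<p}. fst (\<beta> k)) (\<lambda>k\<in>{0..<p}. snd (\<beta> k))"
proof -
  define s where "s = (\<lambda>k\<in>{0..<p}. fst (\<alpha> k))"
  define u where "u = (\<lambda>k\<in>{0..<p}. snd (\<alpha> k))"
  define t where "t = (\<lambda>k\<in>{0..<p}. fst (\<beta> k))"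
  define v where "v = (\<lambda>k\<in>{0..<p}. snd (\<beta> k))"
  have kp: "k < p \<Longrightarrow> (k+1) mod p < p" for k by simp
  have dM: "k < p \<Longrightarrow> dM p \<alpha> \<beta> k = ds p s t k" for k
    using kp[of k] by (simp add: dM_def ds_def s_def t_def)
  have dN: "k < p \<Longrightarrow> dN p \<alpha> \<beta> k = ds p u v k" for k
    using kp[of k] by (simp add: dN_def ds_def u_def v_def)
  let ?X = "\<lambda>j. \<Prod>k<p. pha M (int (j k) * ds p s t k)"
  let ?Y = "\<lambda>b. (\<Prod>k<p. pha N (int (b k) * ds p u v k)) * (if Apos p s t b = Aneg p s t b then 1 else 0)"
  have "Tmat M N p \<alpha> \<beta> = (\<Sum>\<gamma>\<in>PiE {0..<p} (\<lambda>_. {0..<M} \<times> {0..<N}). PH M N p \<alpha> \<beta> \<gamma> *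
           (if Apos p (fst \<circ> \<alpha>) (fst \<circ> \<beta>) (snd \<circ> \<gamma>) = Aneg p (fst \<circ> \<alpha>) (fst \<circ> \<beta>) (snd \<circ> \<gamma>) then 1 else 0))
           / of_nat (M*N) ^ (p+1)"
    using Tmat_formula[OF \<alpha> \<beta> p] by (simp add: idx_def)
  also have "\<dots> = (\<Sum>j\<in>PiE {0..<p} (\<lambda>_. {0..<M}). \<Sum>b\<in>PiE {0..<p} (\<lambda>_. {0..<N}). ?X j * ?Y b) / of_nat (M*N) ^ (p+1)"
    unfolding split_PiE
  proof (intro arg_cong2[where f="(/)"] refl sum.cong)
    fix j b assume j: "j \<in> PiE {0..<p} (\<lambda>_. {0..<M})" and b: "b \<in> PiE {0..<p} (\<lambda>_. {0..<N})"
    let ?g = "\<lambda>i\<in>{0..<p}. (j i, b i)"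
    have "PH M N p \<alpha> \<beta> ?g = ?X j * (\<Prod>k<p. pha N (int (b k) * ds p u v k))"
      unfolding PH_def prod.distrib[symmetric] by (intro prod.cong refl) (simp add: dM dN)
    moreover have "Apos p (fst \<circ> \<alpha>) (fst \<circ> \<beta>) (snd \<circ> ?g) = Apos p s t b"
                  "Aneg p (fst \<circ> \<alpha>) (fst \<circ> \<beta>) (snd \<circ> ?g) = Aneg p s t b"
      by (intro Apos_cong; simp add: s_def t_def)+
    ultimately show "PH M N p \<alpha> \<beta> ?g * (if Apos p (fst \<circ> \<alpha>) (fst \<circ> \<beta>) (snd \<circ> ?g) = Aneg p (fst \<circ> \<alpha>) (fst \<circ> \<beta>) (snd \<circ> ?g) then 1 else 0)
        = ?X j * ?Y b" by simp
  qed
  also have "\<dots> = (\<Sum>j\<in>PiE {0..<p} (\<lambda>_. {0..<M}). ?X j) * (\<Sum>b\<in>PiE {0..<p} (\<lambda>_. {0..<N}). ?Y b) / of_nat (M*N) ^ (p+1)"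
    by (simp add: sum_product)
  also have "(\<Sum>j\<in>PiE {0..<p} (\<lambda>_. {0..<M}). ?X j) = (\<Prod>k\<in>{0..<p}. \<Sum>u\<in>{0..<M}. pha M (int u * ds p s t k))"
    by (subst prod_sum_PiE) (auto simp: lessThan_atLeast0)
  also have "\<dots> = (\<Prod>k\<in>{0..<p}. if int M dvd ds p s t k then of_nat M else 0)"
    by (simp add: char_sum'[OF M])
  also have "\<dots> = (if \<forall>k<p. int M dvd ds p s t k then of_nat M ^ p else 0)"
    by (subst prod_if_const) auto
  finally show ?thesis unfolding s_def[symmetric] u_def[symmetric] t_def[symmetric] v_def[symmetric] T2_def .
qed

lemma pred_succ: "(k::nat) < P \<Longrightarrow> ((k+1) mod P + P - 1) mod P = k"
proof -
  assume k: "k < P"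
  show ?thesis
  proof (cases "k + 1 < P")
    case True
    then have "(k+1) mod P = k + 1" by simp
    then have "(k+1) mod P + P - 1 = k + P" by simp
    then show ?thesis using k by simp
  next
    case False
    then have "k + 1 = P" using k by simp
    then show ?thesis by simp
  qed
qed

lemma succ_pred: "(k::nat) < P \<Longrightarrow> ((k+P-1) mod P + 1) mod P = k"
proof -
  assume k: "k < P"
  show ?thesis
  proof (cases "k = 0")
    case True
    have "(k+P-1) mod P = (P - 1) mod P" using True by simp
    also have "\<dots> = P - 1" using k by (intro mod_less) linarith
    finally have "(k+P-1) mod P = P - 1" .
    moreover have "P - 1 + 1 = P" using k by linarith
    ultimately show ?thesis using True by simp
  next
    case False
    have e: "k + P - 1 = (k - 1) + P" using False by linarith
    have "(k+P-1) mod P = (k-1) mod P" unfolding e by (rule mod_add_self2)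
    also have "\<dots> = k - 1" using k by (intro mod_less) linarith
    finally have "(k+P-1) mod P + 1 = k" using False by linarith
    then show ?thesis using k by simp
  qed
qed

lemma shift_sum:
  assumes "0 < (P::nat)"
  shows "(\<Sum>k<P. f k ((k+1) mod P)) = (\<Sum>k<P. f ((k+P-1) mod P) k)"
proof (rule sum.reindex_bij_witness[where j="\<lambda>k. (k+1) mod P" and i="\<lambda>k. (k+P-1) mod P"])
  fix k assume "k \<in> {..<P}"
  then show "(((k+1) mod P) + P - 1) mod P = k" using pred_succ[of k P] by simp
  show "(k+1) mod P \<in> {..<P}" using assms by simp
  show "f ((((k + 1) mod P) + P - 1) mod P) ((k+1) mod P) = f k ((k+1) mod P)"
    using \<open>k \<in> _\<close> pred_succ[of k P] by simp
next
  fix k assume "k \<in> {..<P}"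
  then show "((k+P-1) mod P + 1) mod P = k" using succ_pred[of k P] by simp
  show "(k+P-1) mod P \<in> {..<P}" using assms by simp
qed

lemma pha_prod: "finite A \<Longrightarrow> (\<Prod>i\<in>A. pha n (f i)) = pha n (\<Sum>i\<in>A. f i)"
  by (induction A rule: finite_induct) (simp_all add: pha_add)

lemma exponent_identity:
  fixes B U :: "nat \<Rightarrow> nat \<Rightarrow> nat" and r p :: nat
  assumes r: "0 < r" and p: "0 < p"
  shows "(\<Sum>x<r. \<Sum>k<p. int (B x k) * ds p (U x) (U ((x+1) mod r)) k)
       = (\<Sum>x<r. \<Sum>k<p. int (U x k) * ds p (B ((x+r-1) mod r)) (B x) ((k+p-1) mod p))"
proof -
  let ?xp = "\<lambda>x. (x+r-1) mod r" and ?kp = "\<lambda>k. (k+p-1) mod p"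
  have L1: "(\<Sum>x<r. \<Sum>k<p. int (B x k) * int (U x ((k+1) mod p))) = (\<Sum>x<r. \<Sum>k<p. int (U x k) * int (B x (?kp k)))"
  proof (rule sum.cong[OF refl])
    fix x show "(\<Sum>k<p. int (B x k) * int (U x ((k+1) mod p))) = (\<Sum>k<p. int (U x k) * int (B x (?kp k)))"
      using shift_sum[OF p, of "\<lambda>k k'. int (B x k) * int (U x k')"] by (simp add: mult.commute)
  qed
  have L2: "(\<Sum>x<r. \<Sum>k<p. int (B x k) * int (U ((x+1) mod r) ((k+1) mod p))) = (\<Sum>x<r. \<Sum>k<p. int (U x k) * int (B (?xp x) (?kp k)))"
    apply (subst shift_sum[OF r, where f="\<lambda>x x'. \<Sum>k<p. int (B x k) * int (U x' ((k+1) mod p))"])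
  proof (rule sum.cong[OF refl])
    fix x show "(\<Sum>k<p. int (B (?xp x) k) * int (U x ((k+1) mod p))) = (\<Sum>k<p. int (U x k) * int (B (?xp x) (?kp k)))"
      using shift_sum[OF p, of "\<lambda>k k'. int (B (?xp x) k) * int (U x k')"] by (simp add: mult.commute)
  qed
  have L4: "(\<Sum>x<r. \<Sum>k<p. int (B x k) * int (U ((x+1) mod r) k)) = (\<Sum>x<r. \<Sum>k<p. int (U x k) * int (B (?xp x) k))"
    by (subst shift_sum[OF r, where f="\<lambda>x x'. \<Sum>k<p. int (B x k) * int (U x' k)"]) (simp add: mult.commute)
  have "(\<Sum>x<r. \<Sum>k<p. int (B x k) * ds p (U x) (U ((x+1) mod r)) k)
     = (\<Sum>x<r. \<Sum>k<p. int (B x k) * int (U x ((k+1) mod p))) - (\<Sum>x<r. \<Sum>k<p. int (B x k) * int (U ((x+1) mod r) ((k+1) mod p)))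
       - (\<Sum>x<r. \<Sum>k<p. int (B x k) * int (U x k)) + (\<Sum>x<r. \<Sum>k<p. int (B x k) * int (U ((x+1) mod r) k))"
  proof -
    have "(\<Sum>x<r. \<Sum>k<p. int (B x k) * ds p (U x) (U ((x+1) mod r)) k) =
      (\<Sum>x<r. \<Sum>k<p. int (B x k) * int (U x ((k+1) mod p)) - int (B x k) * int (U ((x+1) mod r) ((k+1) mod p))
         - int (B x k) * int (U x k) + int (B x k) * int (U ((x+1) mod r) k))"
      by (intro sum.cong refl) (simp add: ds_def right_diff_distrib distrib_left)
    then show ?thesis by (simp only: sum.distrib sum_subtractf)
  qed
  also have "\<dots> = (\<Sum>x<r. \<Sum>k<p. int (U x k) * int (B x (?kp k))) - (\<Sum>x<r. \<Sum>k<p. int (U x k) * int (B (?xp x) (?kp k)))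
       - (\<Sum>x<r. \<Sum>k<p. int (U x k) * int (B x k)) + (\<Sum>x<r. \<Sum>k<p. int (U x k) * int (B (?xp x) k))"
    unfolding L1 L2 L4 by (simp add: mult.commute)
  also have "\<dots> = (\<Sum>x<r. \<Sum>k<p. int (U x k) * (int (B (?xp x) k) - int (B x k) - int (B (?xp x) (?kp k)) + int (B x (?kp k))))"
  proof -
    have "(\<Sum>x<r. \<Sum>k<p. int (U x k) * (int (B (?xp x) k) - int (B x k) - int (B (?xp x) (?kp k)) + int (B x (?kp k))))
      = (\<Sum>x<r. \<Sum>k<p. int (U x k) * int (B x (?kp k)) - int (U x k) * int (B (?xp x) (?kp k))
          - int (U x k) * int (B x k) + int (U x k) * int (B (?xp x) k))"
      by (intro sum.cong refl) (simp add: algebra_simps)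
    then show ?thesis by (simp only: sum.distrib sum_subtractf)
  qed
  also have "\<dots> = (\<Sum>x<r. \<Sum>k<p. int (U x k) * ds p (B (?xp x)) (B x) (?kp k))"
  proof -
    have sp: "k < p \<Longrightarrow> Suc ((k + p - Suc 0) mod p) mod p = k" for k using succ_pred[of k p] by simp
    show ?thesis by (intro sum.cong refl) (simp add: ds_def sp)
  qed
  finally show ?thesis .
qed

lemma prod_sum_PiE2:
  fixes h :: "nat \<Rightarrow> nat \<Rightarrow> nat \<Rightarrow> complex"
  shows "(\<Sum>U\<in>PiE {0..<r} (\<lambda>_. PiE {0..<p} (\<lambda>_. {0..<N})). \<Prod>x<r. \<Prod>k<p. h x k (U x k))
       = (\<Prod>x<r. \<Prod>k<p. \<Sum>u\<in>{0..<N}. h x k u)"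
proof -
  have "(\<Prod>x<r. \<Prod>k<p. \<Sum>u\<in>{0..<N}. h x k u) = (\<Prod>x\<in>{0..<r}. \<Sum>V\<in>PiE {0..<p} (\<lambda>_. {0..<N}). \<Prod>k\<in>{0..<p}. h x k (V k))"
    by (intro prod.cong) (auto simp: lessThan_atLeast0 prod_sum_PiE)
  also have "\<dots> = (\<Sum>U\<in>PiE {0..<r} (\<lambda>_. PiE {0..<p} (\<lambda>_. {0..<N})). \<Prod>x\<in>{0..<r}. \<Prod>k\<in>{0..<p}. h x k (U x k))"
    by (rule prod_sum_PiE) (auto intro: finite_PiE)
  finally show ?thesis by (simp add: lessThan_atLeast0)
qed

lemma usum:
  fixes B :: "nat \<Rightarrow> nat \<Rightarrow> nat"
  assumes r: "0 < r" and p: "0 < p" and N: "0 < N"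
  shows "(\<Sum>U\<in>PiE {0..<r} (\<lambda>_. PiE {0..<p} (\<lambda>_. {0..<N})). \<Prod>x<r. \<Prod>k<p. pha N (int (B x k) * ds p (U x) (U ((x+1) mod r)) k))
       = (if \<forall>x<r. \<forall>k<p. int N dvd ds p (B x) (B ((x+1) mod r)) k then of_nat N ^ (r*p) else 0)"
proof -
  define G where "G x k = ds p (B ((x+r-1) mod r)) (B x) ((k+p-1) mod p)" for x k
  have step1: "(\<Prod>x<r. \<Prod>k<p. pha N (int (B x k) * ds p (U x) (U ((x+1) mod r)) k))
        = (\<Prod>x<r. \<Prod>k<p. pha N (int (U x k) * G x k))" for U :: "nat \<Rightarrow> nat \<Rightarrow> nat"
    unfolding G_def pha_prod[OF finite_lessThan] exponent_identity[OF r p] ..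
  have "(\<Sum>U\<in>PiE {0..<r} (\<lambda>_. PiE {0..<p} (\<lambda>_. {0..<N})). \<Prod>x<r. \<Prod>k<p. pha N (int (B x k) * ds p (U x) (U ((x+1) mod r)) k))
      = (\<Sum>U\<in>PiE {0..<r} (\<lambda>_. PiE {0..<p} (\<lambda>_. {0..<N})). \<Prod>x<r. \<Prod>k<p. pha N (int (U x k) * G x k))"
    by (rule sum.cong[OF refl], rule step1)
  also have "\<dots> = (\<Prod>x<r. \<Prod>k<p. \<Sum>u\<in>{0..<N}. pha N (int u * G x k))"
    by (rule prod_sum_PiE2)
  also have "\<dots> = (\<Prod>x<r. \<Prod>k<p. if int N dvd G x k then of_nat N else 0)"
    by (simp add: char_sum'[OF N])
  also have "\<dots> = (\<Prod>x<r. if \<forall>k<p. int N dvd G x k then of_nat N ^ p else 0)"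
    by (intro prod.cong refl, subst prod_if_const) auto
  also have "\<dots> = (if \<forall>x<r. \<forall>k<p. int N dvd G x k then (of_nat N ^ p) ^ r else 0)"
    by (subst prod_if_const) auto
  also have "(\<forall>x<r. \<forall>k<p. int N dvd G x k) \<longleftrightarrow> (\<forall>x<r. \<forall>k<p. int N dvd ds p (B x) (B ((x+1) mod r)) k)"
  proof
    assume h: "\<forall>x<r. \<forall>k<p. int N dvd G x k"
    show "\<forall>x<r. \<forall>k<p. int N dvd ds p (B x) (B ((x+1) mod r)) k"
    proof (intro allI impI)
      fix x k assume x: "x < r" and k: "k < p"
      have "G ((x+1) mod r) ((k+1) mod p) = ds p (B x) (B ((x+1) mod r)) k"
        unfolding G_def using pred_succ[OF x] pred_succ[OF k] by simp
      moreover have "int N dvd G ((x+1) mod r) ((k+1) mod p)" using h r p by simp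
      ultimately show "int N dvd ds p (B x) (B ((x+1) mod r)) k" by simp
    qed
  next
    assume h: "\<forall>x<r. \<forall>k<p. int N dvd ds p (B x) (B ((x+1) mod r)) k"
    show "\<forall>x<r. \<forall>k<p. int N dvd G x k"
    proof (intro allI impI)
      fix x k assume x: "x < r" and k: "k < p"
      have "G x k = ds p (B ((x+r-1) mod r)) (B (((x+r-1) mod r + 1) mod r)) ((k+p-1) mod p)"
        unfolding G_def using succ_pred[OF x] by simp
      then show "int N dvd G x k" using h r p by simp
    qed
  qed
  finally have fin: "(\<Sum>U\<in>PiE {0..<r} (\<lambda>_. PiE {0..<p} (\<lambda>_. {0..<N})). \<Prod>x<r. \<Prod>k<p. pha N (int (B x k) * ds p (U x) (U ((x+1) mod r)) k))
       = (if \<forall>x<r. \<forall>k<p. int N dvd ds p (B x) (B ((x+1) mod r)) k then (of_nat N ^ p) ^ r else 0)" .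
  have pw: "(of_nat N ^ p) ^ r = (of_nat N :: complex) ^ (r*p)" by (simp add: power_mult[symmetric] mult.commute)
  show ?thesis using fin unfolding pw .
qed

definition okd :: "nat \<Rightarrow> nat \<Rightarrow> nat \<Rightarrow> (nat \<Rightarrow> nat \<Rightarrow> nat) \<Rightarrow> bool" where
  "okd n r p S \<longleftrightarrow> (\<forall>x<r. \<forall>k<p. int n dvd ds p (S x) (S ((x+1) mod r)) k)"

definition mcall :: "nat \<Rightarrow> nat \<Rightarrow> (nat \<Rightarrow> nat \<Rightarrow> nat) \<Rightarrow> (nat \<Rightarrow> nat \<Rightarrow> nat) \<Rightarrow> bool" where
  "mcall r p S B \<longleftrightarrow> (\<forall>x<r. Apos p (S x) (S ((x+1) mod r)) (B x) = Aneg p (S x) (S ((x+1) mod r)) (B x))"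

lemma restr_pair:
  assumes "S \<in> PiE I (\<lambda>_. PiE J (\<lambda>_. A0))" "x \<in> I"
  shows "(\<lambda>k\<in>J. fst ((\<lambda>x\<in>I. \<lambda>k\<in>J. (S x k, U x k)) x k)) = S x"
        "(\<lambda>k\<in>J. snd ((\<lambda>x\<in>I. \<lambda>k\<in>J. (U x k, S x k)) x k)) = S x"
proof -
  have Sx: "S x \<in> PiE J (\<lambda>_. A0)" using assms by auto
  have e: "(\<lambda>k\<in>J. S x k) = S x"
  proof (rule ext)
    fix k show "(\<lambda>k\<in>J. S x k) k = S x k" using PiE_arb[OF Sx, of k] by (cases "k \<in> J") auto
  qed
  have "(\<lambda>k\<in>J. fst ((\<lambda>x\<in>I. \<lambda>k\<in>J. (S x k, U x k)) x k)) = (\<lambda>k\<in>J. S x k)"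
    by (intro restrict_ext) (simp add: assms(2))
  then show "(\<lambda>k\<in>J. fst ((\<lambda>x\<in>I. \<lambda>k\<in>J. (S x k, U x k)) x k)) = S x" using e by simp
  have "(\<lambda>k\<in>J. snd ((\<lambda>x\<in>I. \<lambda>k\<in>J. (U x k, S x k)) x k)) = (\<lambda>k\<in>J. S x k)"
    by (intro restrict_ext) (simp add: assms(2))
  then show "(\<lambda>k\<in>J. snd ((\<lambda>x\<in>I. \<lambda>k\<in>J. (U x k, S x k)) x k)) = S x" using e by simp
qed

lemma cpr_step1:
  assumes M: "0 < M" and p: "0 < p" and r: "0 < r"
  shows "cpr M N p r = (\<Sum>S\<in>PiE {0..<r} (\<lambda>_. PiE {0..<p} (\<lambda>_. {0..<M})). \<Sum>U\<in>PiE {0..<r} (\<lambda>_. PiE {0..<p} (\<lambda>_. {0..<N})).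
      \<Prod>x<r. T2 M N p (S x) (U x) (S ((x+1) mod r)) (U ((x+1) mod r)))"
proof -
  have fin: "finite (idxp M N p)" by (simp add: idxp_def finite_PiE)
  have "cpr M N p r = (\<Sum>A\<in>PiE {0..<r} (\<lambda>_. idxp M N p). \<Prod>x<r. Tmat M N p (A x) (A ((x+1) mod r)))"
    unfolding cpr_def by (rule trace_mpow[OF fin r])
  also have "\<dots> = (\<Sum>A\<in>PiE {0..<r} (\<lambda>_. idxp M N p). \<Prod>x<r. T2 M N p (\<lambda>k\<in>{0..<p}. fst (A x k)) (\<lambda>k\<in>{0..<p}. snd (A x k))
        (\<lambda>k\<in>{0..<p}. fst (A ((x+1) mod r) k)) (\<lambda>k\<in>{0..<p}. snd (A ((x+1) mod r) k)))"
  proof (intro sum.cong refl prod.cong)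
    fix A x assume A: "A \<in> PiE {0..<r} (\<lambda>_. idxp M N p)" and x: "x \<in> {..<r}"
    have "A x \<in> idxp M N p" "A ((x+1) mod r) \<in> idxp M N p" using A x r by auto
    then show "Tmat M N p (A x) (A ((x+1) mod r)) = T2 M N p (\<lambda>k\<in>{0..<p}. fst (A x k)) (\<lambda>k\<in>{0..<p}. snd (A x k))
        (\<lambda>k\<in>{0..<p}. fst (A ((x+1) mod r) k)) (\<lambda>k\<in>{0..<p}. snd (A ((x+1) mod r) k))"
      by (intro T2_eq p M)
  qed
  also have "\<dots> = (\<Sum>S\<in>PiE {0..<r} (\<lambda>_. PiE {0..<p} (\<lambda>_. {0..<M})). \<Sum>U\<in>PiE {0..<r} (\<lambda>_. PiE {0..<p} (\<lambda>_. {0..<N})).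
      \<Prod>x<r. T2 M N p (S x) (U x) (S ((x+1) mod r)) (U ((x+1) mod r)))"
    unfolding idxp_def idx_def split_PiE2
  proof (intro sum.cong refl prod.cong)
    fix S U x assume S: "S \<in> PiE {0..<r} (\<lambda>_. PiE {0..<p} (\<lambda>_. {0..<M}))" and U: "U \<in> PiE {0..<r} (\<lambda>_. PiE {0..<p} (\<lambda>_. {0..<N}))"
      and x: "x \<in> {..<r}"
    have x1: "x \<in> {0..<r}" "(x+1) mod r \<in> {0..<r}" using x r by auto
    show "T2 M N p (\<lambda>k\<in>{0..<p}. fst ((\<lambda>x\<in>{0..<r}. \<lambda>k\<in>{0..<p}. (S x k, U x k)) x k))
             (\<lambda>k\<in>{0..<p}. snd ((\<lambda>x\<in>{0..<r}. \<lambda>k\<in>{0..<p}. (S x k, U x k)) x k))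
             (\<lambda>k\<in>{0..<p}. fst ((\<lambda>x\<in>{0..<r}. \<lambda>k\<in>{0..<p}. (S x k, U x k)) ((x+1) mod r) k))
             (\<lambda>k\<in>{0..<p}. snd ((\<lambda>x\<in>{0..<r}. \<lambda>k\<in>{0..<p}. (S x k, U x k)) ((x+1) mod r) k))
        = T2 M N p (S x) (U x) (S ((x+1) mod r)) (U ((x+1) mod r))"
      unfolding restr_pair(1)[OF S x1(1)] restr_pair(1)[OF S x1(2)] restr_pair(2)[OF U x1(1)] restr_pair(2)[OF U x1(2)] ..
  qed
  finally show ?thesis .
qed

lemma prod_T2:
  assumes p: "0 < p" and r: "0 < r" and N: "0 < N"
  shows "(\<Sum>U\<in>PiE {0..<r} (\<lambda>_. PiE {0..<p} (\<lambda>_. {0..<N})). \<Prod>x<r. T2 M N p (S x) (U x) (S ((x+1) mod r)) (U ((x+1) mod r)))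
    = (of_nat M ^ (p*r) * of_nat N ^ (r*p) / of_nat (M*N) ^ ((p+1)*r)) *
      (\<Sum>B\<in>PiE {0..<r} (\<lambda>_. PiE {0..<p} (\<lambda>_. {0..<N})). if okd M r p S \<and> okd N r p B \<and> mcall r p S B then 1 else 0)"
proof -
  let ?PS = "PiE {0..<r} (\<lambda>_. PiE {0..<p} (\<lambda>_. {0..<N}))"
  let ?K = "(of_nat (M*N) :: complex) ^ ((p+1)*r)"
  let ?c1 = "\<lambda>x. if \<forall>k<p. int M dvd ds p (S x) (S ((x+1) mod r)) k then (of_nat M :: complex) ^ p else 0"
  let ?mc = "\<lambda>x b. Apos p (S x) (S ((x+1) mod r)) b = Aneg p (S x) (S ((x+1) mod r)) b"
  let ?Y = "\<lambda>U x b. (\<Prod>k<p. pha N (int (b k) * ds p (U x) (U ((x+1) mod r)) k)) * (if ?mc x b then 1 else 0)"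
  let ?PH = "\<lambda>U B. \<Prod>x<r. \<Prod>k<p. pha N (int (B x k) * ds p (U x) (U ((x+1) mod r)) k)"
  have c1: "(\<Prod>x<r. ?c1 x) = (if okd M r p S then of_nat M ^ (p*r) else 0)"
    by (subst prod_if_const) (auto simp: okd_def power_mult)
  have T2prod: "(\<Prod>x<r. T2 M N p (S x) (U x) (S ((x+1) mod r)) (U ((x+1) mod r)))
      = (\<Prod>x<r. ?c1 x) * (\<Sum>B\<in>?PS. ?PH U B * (if mcall r p S B then 1 else 0)) / ?K" for U
  proof -
    have "(\<Prod>x<r. T2 M N p (S x) (U x) (S ((x+1) mod r)) (U ((x+1) mod r)))
        = (\<Prod>x<r. ?c1 x * (\<Sum>b\<in>PiE {0..<p} (\<lambda>_. {0..<N}). ?Y U x b) / of_nat (M*N) ^ (p+1))"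
      unfolding T2_def ..
    also have "\<dots> = (\<Prod>x<r. ?c1 x) * (\<Prod>x<r. \<Sum>b\<in>PiE {0..<p} (\<lambda>_. {0..<N}). ?Y U x b) / ?K"
      by (simp only: prod_dividef prod.distrib prod_constant card_lessThan power_mult[symmetric])
    also have "(\<Prod>x<r. \<Sum>b\<in>PiE {0..<p} (\<lambda>_. {0..<N}). ?Y U x b) = (\<Sum>B\<in>?PS. \<Prod>x\<in>{0..<r}. ?Y U x (B x))"
      by (subst prod_sum_PiE[symmetric]) (auto simp: lessThan_atLeast0 intro: finite_PiE)
    also have "\<dots> = (\<Sum>B\<in>?PS. ?PH U B * (if mcall r p S B then 1 else 0))"
    proof (rule sum.cong[OF refl])
      fix B
      have "(\<Prod>x\<in>{0..<r}. ?Y U x (B x)) = ?PH U B * (\<Prod>x\<in>{0..<r}. if ?mc x (B x) then 1 else 0)"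
        by (simp add: prod.distrib lessThan_atLeast0)
      also have "(\<Prod>x\<in>{0..<r}. if ?mc x (B x) then 1 else (0::complex)) = (if mcall r p S B then 1 else 0)"
        by (subst prod_if_const) (auto simp: mcall_def)
      finally show "(\<Prod>x\<in>{0..<r}. ?Y U x (B x)) = ?PH U B * (if mcall r p S B then 1 else 0)" .
    qed
    finally show ?thesis .
  qed
  have "(\<Sum>U\<in>?PS. \<Prod>x<r. T2 M N p (S x) (U x) (S ((x+1) mod r)) (U ((x+1) mod r)))
      = (\<Prod>x<r. ?c1 x) / ?K * (\<Sum>B\<in>?PS. (if mcall r p S B then 1 else 0) * (\<Sum>U\<in>?PS. ?PH U B))"
    unfolding T2prod
    by (simp add: sum_divide_distrib[symmetric] sum_distrib_left[symmetric] sum_distrib_right sum.swap[of _ ?PS ?PS] mult_ac)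
  also have "\<dots> = (\<Prod>x<r. ?c1 x) / ?K * (\<Sum>B\<in>?PS. (if mcall r p S B then 1 else 0) * (if okd N r p B then of_nat N ^ (r*p) else 0))"
  proof (rule arg_cong2[where f="(*)"], rule refl, rule sum.cong[OF refl])
    fix B
    show "(if mcall r p S B then 1 else 0) * (\<Sum>U\<in>?PS. ?PH U B) = (if mcall r p S B then 1 else 0) * (if okd N r p B then of_nat N ^ (r*p) else 0)"
      unfolding usum[OF r p N, of B] okd_def ..
  qed
  also have "\<dots> = (of_nat M ^ (p*r) * of_nat N ^ (r*p) / ?K) *
      (\<Sum>B\<in>?PS. if okd M r p S \<and> okd N r p B \<and> mcall r p S B then 1 else 0)"
    unfolding c1 by (auto simp: sum_distrib_left intro!: sum.cong)
  finally show ?thesis .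
qed

definition Phi :: "nat \<Rightarrow> nat \<Rightarrow> nat \<Rightarrow> (nat \<Rightarrow> nat) \<Rightarrow> (nat \<Rightarrow> nat) \<Rightarrow> nat \<Rightarrow> nat \<Rightarrow> nat" where
  "Phi n R P i a = (\<lambda>x\<in>{0..<R}. \<lambda>k\<in>{0..<P}. (i x + a k) mod n)"

lemma dvd_mod_diff: "int n dvd int (u mod n) - int u"
proof -
  have "(int u mod int n) mod int n = int u mod int n" by (rule mod_mod_trivial)
  then have "int n dvd int u mod int n - int u" by (simp only: mod_eq_dvd_iff)
  then show ?thesis by (simp only: of_nat_mod)
qed

lemma eq_by_dvd: "a < n \<Longrightarrow> b < n \<Longrightarrow> int n dvd int a - int b \<Longrightarrow> a = (b::nat)"
proof -
  assume a: "a < n" and b: "b < n" and d: "int n dvd int a - int b"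
  then have "int a mod int n = int b mod int n" by (simp only: mod_eq_dvd_iff)
  moreover have "int a mod int n = int a" using a by (intro mod_pos_pos_trivial) auto
  moreover have "int b mod int n = int b" using b by (intro mod_pos_pos_trivial) auto
  ultimately show "a = b" by simp
qed

lemma ok_param:
  assumes ok: "okd n R P S" and x: "x < R" and k: "k < P"
  shows "int n dvd int (S x k) - int (S x 0) - int (S 0 k) + int (S 0 0)"
proof -
  define e where "e x k = int (S x k) - int (S ((x+1) mod R) k)" for x k
  have A: "int n dvd e x k - e x 0" if x: "x < R" and k: "k < P" for x k
    using k
  proof (induction k)
    case 0
    then show ?case by simp
  next
    case (Suc k)
    then have "int n dvd ds P (S x) (S ((x+1) mod R)) k" using ok x by (simp add: okd_def)
    moreover have "ds P (S x) (S ((x+1) mod R)) k = e x (Suc k) - e x k"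
      using Suc.prems by (simp add: ds_def e_def)
    ultimately have "int n dvd e x (Suc k) - e x k" by simp
    moreover have "int n dvd e x k - e x 0" using Suc by simp
    ultimately have "int n dvd (e x (Suc k) - e x k) + (e x k - e x 0)" by (rule dvd_add)
    then show ?case by simp
  qed
  have B: "int n dvd (int (S x k) - int (S 0 k)) - (int (S x 0) - int (S 0 0))" if x: "x < R" for x
    using x
  proof (induction x)
    case 0
    then show ?case by simp
  next
    case (Suc x)
    then have x1: "x < R" "Suc x mod R = Suc x" by auto
    have "int n dvd e x k - e x 0" using A[OF x1(1) k] .
    then have h1: "int n dvd (int (S x k) - int (S (Suc x) k)) - (int (S x 0) - int (S (Suc x) 0))"
      by (simp add: e_def x1(2))
    have h2: "int n dvd (int (S x k) - int (S 0 k)) - (int (S x 0) - int (S 0 0))" using Suc x1 by simp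
    have "int n dvd ((int (S x k) - int (S 0 k)) - (int (S x 0) - int (S 0 0))) -
                    ((int (S x k) - int (S (Suc x) k)) - (int (S x 0) - int (S (Suc x) 0)))"
      using h1 h2 by (rule dvd_diff[rotated])
    then show ?case by (simp add: algebra_simps)
  qed
  show ?thesis using B[OF x] by (simp add: algebra_simps)
qed

lemma okd_Phi:
  assumes "0 < R" "0 < P"
  shows "okd n R P (Phi n R P i a)"
  unfolding okd_def
proof (intro allI impI)
  fix x k assume x: "x < R" and k: "k < P"
  let ?x' = "(x+1) mod R" and ?k' = "(k+1) mod P"
  have x': "?x' < R" and k': "?k' < P" using assms by auto
  let ?D = "\<lambda>u. int (u mod n) - int u"
  have "ds P (Phi n R P i a x) (Phi n R P i a ?x') k
     = ?D (i x + a ?k') - ?D (i ?x' + a ?k') - ?D (i x + a k) + ?D (i ?x' + a k)"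
    using x x' k k' by (simp add: ds_def Phi_def)
  moreover have "int n dvd ?D (i x + a ?k') - ?D (i ?x' + a ?k') - ?D (i x + a k) + ?D (i ?x' + a k)"
    by (intro dvd_add dvd_diff dvd_mod_diff)
  ultimately show "int n dvd ds P (Phi n R P i a x) (Phi n R P i a ?x') k" by simp
qed

lemma modsum_dvd: "int n dvd int ((a mod n + b mod n) mod n) - int a - int b"
proof -
  have eq: "int ((a mod n + b mod n) mod n) - int a - int b =
        (int ((a mod n + b mod n) mod n) - int (a mod n + b mod n)) + (int (a mod n) - int a) + (int (b mod n) - int b)"
    by simp
  have "int n dvd (int ((a mod n + b mod n) mod n) - int (a mod n + b mod n)) + (int (a mod n) - int a) + (int (b mod n) - int b)"
    by (intro dvd_add dvd_mod_diff)
  then show ?thesis unfolding eq .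
qed

lemma PiE2_eqI:
  fixes R P :: nat
  assumes "S \<in> PiE {0..<R} (\<lambda>_. PiE {0..<P} (\<lambda>_. A0))"
    and "\<And>x k. x < R \<Longrightarrow> k < P \<Longrightarrow> f x k = S x k"
  shows "(\<lambda>x\<in>{0..<R}. \<lambda>k\<in>{0..<P}. f x k) = S"
proof (intro ext)
  fix x k
  show "(\<lambda>x\<in>{0..<R}. \<lambda>k\<in>{0..<P}. f x k) x k = S x k"
  proof (cases "x < R")
    case True
    then have "x \<in> {0..<R}" by simp
    then have "S x \<in> PiE {0..<P} (\<lambda>_. A0)" by (rule PiE_mem[OF assms(1)])
    then show ?thesis using True assms(2)[of x k] PiE_arb[of "S x" "{0..<P}" _ k] by (cases "k < P") auto
  next
    case False
    then show ?thesis using PiE_arb[OF assms(1), of x] by simp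
  qed
qed

lemma PiE1_eqI:
  fixes R :: nat
  assumes "I \<in> PiE {0..<R} (\<lambda>_. A0)" and "\<And>x. x < R \<Longrightarrow> f x = I x"
  shows "(\<lambda>x\<in>{0..<R}. f x) = I"
proof (intro ext)
  fix x show "(\<lambda>x\<in>{0..<R}. f x) x = I x"
    using assms(2)[of x] PiE_arb[OF assms(1), of x] by (cases "x < R") auto
qed

lemma lemma_G:
  fixes g :: "(nat \<Rightarrow> nat \<Rightarrow> nat) \<Rightarrow> complex"
  assumes n: "0 < n" and R: "0 < R" and P: "0 < P"
  shows "of_nat n * (\<Sum>S\<in>PiE {0..<R} (\<lambda>_. PiE {0..<P} (\<lambda>_. {0..<n})). if okd n R P S then g S else 0)
       = (\<Sum>i\<in>PiE {0..<R} (\<lambda>_. {0..<n}). \<Sum>a\<in>PiE {0..<P} (\<lambda>_. {0..<n}). g (Phi n R P i a))"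
proof -
  let ?PS = "PiE {0..<R} (\<lambda>_. PiE {0..<P} (\<lambda>_. {0..<n}))"
  let ?OK = "{S\<in>?PS. okd n R P S}"
  let ?T = "PiE {0..<R} (\<lambda>_. {0..<n}) \<times> PiE {0..<P} (\<lambda>_. {0..<n})"
  define jj where "jj q = (\<lambda>x\<in>{0..<R}. (snd q x 0 + (n - fst q)) mod n,
                           \<lambda>k\<in>{0..<P}. (snd q 0 k + (n - snd q 0 0) + fst q) mod n)" for q :: "nat \<times> (nat \<Rightarrow> nat \<Rightarrow> nat)"
  define ii where "ii q = (snd q 0, Phi n R P (fst q) (snd q))" for q :: "(nat \<Rightarrow> nat) \<times> (nat \<Rightarrow> nat)"
  have finPS: "finite ?PS" by (intro finite_PiE) auto
  have Phi_jj: "Phi n R P (fst (jj (m, S))) (snd (jj (m, S))) = S" if mS: "(m, S) \<in> {0..<n} \<times> ?OK" for m S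
  proof -
    have S: "S \<in> ?PS" and ok: "okd n R P S" and m: "m < n" using mS by auto
    have S00: "S 0 0 < n" and Sx: "\<And>x k. x < R \<Longrightarrow> k < P \<Longrightarrow> S x k < n" using S R P by (auto simp: PiE_iff)
    show ?thesis unfolding Phi_def
    proof (rule PiE2_eqI[OF S])
      fix x k assume x: "x < R" and k: "k < P"
      let ?u1 = "S x 0 + (n - m)" and ?u2 = "S 0 k + (n - S 0 0) + m"
      have e: "fst (jj (m, S)) x + snd (jj (m, S)) k = ?u1 mod n + ?u2 mod n"
        using x k by (simp add: jj_def)
      have d1: "int n dvd int ((?u1 mod n + ?u2 mod n) mod n) - int ?u1 - int ?u2" by (rule modsum_dvd)
      have d2: "int n dvd int (S x k) - int (S x 0) - int (S 0 k) + int (S 0 0)" by (rule ok_param[OF ok x k])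
      have "int ((?u1 mod n + ?u2 mod n) mod n) - int (S x k) =
            (int ((?u1 mod n + ?u2 mod n) mod n) - int ?u1 - int ?u2) - (int (S x k) - int (S x 0) - int (S 0 k) + int (S 0 0)) + 2 * int n"
        using m S00 by (simp add: of_nat_diff)
      moreover have "int n dvd \<dots>" by (rule dvd_add[OF dvd_diff[OF d1 d2]]) simp
      ultimately have "int n dvd int ((?u1 mod n + ?u2 mod n) mod n) - int (S x k)" by simp
      then show "(fst (jj (m, S)) x + snd (jj (m, S)) k) mod n = S x k"
        unfolding e using n Sx[OF x k] by (intro eq_by_dvd) auto
    qed
  qed
  have "of_nat n * (\<Sum>S\<in>?PS. if okd n R P S then g S else 0) = of_nat n * (\<Sum>S\<in>?OK. g S)"
    using finPS by (simp add: sum.inter_filter)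
  also have "\<dots> = (\<Sum>q\<in>{0..<n} \<times> ?OK. g (snd q))"
  proof -
    have "of_nat n * (\<Sum>S\<in>?OK. g S) = (\<Sum>m\<in>{0..<n}. \<Sum>S\<in>?OK. g S)" by simp
    also have "\<dots> = (\<Sum>q\<in>{0..<n} \<times> ?OK. g (snd q))"
      by (simp only: sum.cartesian_product split_def)
    finally show ?thesis .
  qed
  also have "\<dots> = (\<Sum>q\<in>?T. g (Phi n R P (fst q) (snd q)))"
  proof (rule sum.reindex_bij_witness[where j=jj and i=ii])
    fix q assume q: "q \<in> {0..<n} \<times> ?OK"
    obtain m S where qe: "q = (m, S)" by (cases q)
    have S: "S \<in> ?PS" and m: "m < n" using q qe by auto
    have S00: "S 0 0 < n" using S R P by (auto simp: PiE_iff)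
    have "snd (jj (m, S)) 0 = m"
    proof -
      have "S 0 0 + (n - S 0 0) + m = m + n" using S00 by simp
      then show ?thesis using P m by (simp add: jj_def)
    qed
    then show "ii (jj q) = q" unfolding qe ii_def using Phi_jj[of m S] q qe by simp
    show "jj q \<in> ?T" unfolding qe jj_def using n by auto
    show "g (Phi n R P (fst (jj q)) (snd (jj q))) = g (snd q)" using Phi_jj[of m S] q qe by simp
  next
    fix q assume q: "q \<in> ?T"
    obtain I A where qe: "q = (I, A)" by (cases q)
    have I: "I \<in> PiE {0..<R} (\<lambda>_. {0..<n})" and A: "A \<in> PiE {0..<P} (\<lambda>_. {0..<n})" using q qe by auto
    have Ib: "\<And>x. x < R \<Longrightarrow> I x < n" and Ab: "\<And>k. k < P \<Longrightarrow> A k < n" using I A by (auto simp: PiE_iff)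
    have A0: "A 0 < n" using Ab P by simp
    have I0: "I 0 < n" using Ib R by simp
    show "ii q \<in> {0..<n} \<times> ?OK"
      unfolding qe ii_def using A0 okd_Phi[OF R P] n by (auto simp: Phi_def)
    have c1: "(\<lambda>x\<in>{0..<R}. (Phi n R P I A x 0 + (n - A 0)) mod n) = I"
    proof (rule PiE1_eqI[OF I])
      fix x assume x: "x < R"
      let ?v = "(I x + A 0) mod n"
      have "int ((?v + (n - A 0)) mod n) - int (I x) =
            (int ((?v + (n - A 0)) mod n) - int (?v + (n - A 0))) + (int ?v - int (I x + A 0)) + int n"
        using A0 by (simp add: of_nat_diff)
      moreover have "int n dvd \<dots>" by (intro dvd_add dvd_mod_diff) auto
      ultimately have "int n dvd int ((?v + (n - A 0)) mod n) - int (I x)" by simp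
      then have "(?v + (n - A 0)) mod n = I x" using n Ib[OF x] by (intro eq_by_dvd) auto
      then show "(Phi n R P I A x 0 + (n - A 0)) mod n = I x" using x P by (simp add: Phi_def)
    qed
    have c2: "(\<lambda>k\<in>{0..<P}. (Phi n R P I A 0 k + (n - Phi n R P I A 0 0) + A 0) mod n) = A"
    proof (rule PiE1_eqI[OF A])
      fix k assume k: "k < P"
      let ?v = "(I 0 + A k) mod n" and ?w = "(I 0 + A 0) mod n"
      have w: "?w < n" using n by simp
      have "int ((?v + (n - ?w) + A 0) mod n) - int (A k) =
            (int ((?v + (n - ?w) + A 0) mod n) - int (?v + (n - ?w) + A 0)) + (int ?v - int (I 0 + A k))
              - (int ?w - int (I 0 + A 0)) + int n"
        using w by (simp add: of_nat_diff)
      moreover have "int n dvd \<dots>" by (intro dvd_add dvd_diff dvd_mod_diff) auto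
      ultimately have "int n dvd int ((?v + (n - ?w) + A 0) mod n) - int (A k)" by simp
      then have "(?v + (n - ?w) + A 0) mod n = A k" using n Ab[OF k] by (intro eq_by_dvd) auto
      then show "(Phi n R P I A 0 k + (n - Phi n R P I A 0 0) + A 0) mod n = A k" using k R P by (simp add: Phi_def)
    qed
    show "jj (ii q) = q" unfolding qe ii_def jj_def using c1 c2 by simp
  qed
  also have "\<dots> = (\<Sum>i\<in>PiE {0..<R} (\<lambda>_. {0..<n}). \<Sum>a\<in>PiE {0..<P} (\<lambda>_. {0..<n}). g (Phi n R P i a))"
    by (simp add: sum.cartesian_product split_def)
  finally show ?thesis .
qed

lemma image_mset_succ:
  assumes p: "0 < p"
  shows "image_mset (\<lambda>k. f ((k+1) mod p)) (mset [0..<p]) = image_mset f (mset [0..<p])"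
proof -
  let ?sc = "\<lambda>k. (k+1) mod p"
  have inj: "inj_on ?sc {0..<p}"
  proof (rule inj_onI)
    fix a b assume "a \<in> {0..<p}" "b \<in> {0..<p}" "?sc a = ?sc b"
    then show "a = b" using pred_succ[of a p] pred_succ[of b p] by auto
  qed
  have im: "?sc ` {0..<p} = {0..<p}"
  proof
    show "?sc ` {0..<p} \<subseteq> {0..<p}" using p by auto
    show "{0..<p} \<subseteq> ?sc ` {0..<p}"
    proof
      fix k assume k: "k \<in> {0..<p}"
      then have "k = ?sc ((k+p-1) mod p)" using succ_pred[of k p] by simp
      moreover have "(k+p-1) mod p \<in> {0..<p}" using p by simp
      ultimately show "k \<in> ?sc ` {0..<p}" by blast
    qed
  qed
  have "image_mset (\<lambda>k. f (?sc k)) (mset [0..<p]) = image_mset f (image_mset ?sc (mset_set {0..<p}))"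
    by (simp add: image_mset.compositionality comp_def)
  also have "image_mset ?sc (mset_set {0..<p}) = mset_set {0..<p}"
    using image_mset_mset_set[OF inj] im by simp
  finally show ?thesis by simp
qed

lemma shift_inj_mset:
  fixes A B :: "(nat \<times> nat) multiset" and N c :: nat
  assumes "set_mset A \<subseteq> UNIV \<times> {0..<N}" "set_mset B \<subseteq> UNIV \<times> {0..<N}" and N: "0 < N"
  shows "image_mset (\<lambda>(m,y). (m, (c + y) mod N)) A = image_mset (\<lambda>(m,y). (m, (c + y) mod N)) B \<longleftrightarrow> A = B"
proof
  let ?f = "\<lambda>(m,y). (m, (c + y) mod N)" and ?g = "\<lambda>(m,y). (m::nat, (y + (N - c mod N)) mod N)"
  have gf: "?g (?f q) = q" if qin: "q \<in> UNIV \<times> {0..<N}" for q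
  proof -
    obtain m y where q: "q = (m, y)" and y: "y < N" using qin by (cases q) auto
    have "int (((c + y) mod N + (N - c mod N)) mod N) - int y =
          (int (((c + y) mod N + (N - c mod N)) mod N) - int ((c + y) mod N + (N - c mod N)))
          + (int ((c + y) mod N) - int (c + y)) - (int (c mod N) - int c) + int N"
    proof -
      have cm: "c mod N \<le> N" using N by (simp add: less_imp_le)
      have "int ((c + y) mod N + (N - c mod N)) = int ((c + y) mod N) + int N - int (c mod N)"
        using cm by (simp add: of_nat_diff)
      then show ?thesis by simp
    qed
    moreover have "int N dvd \<dots>" by (intro dvd_add dvd_diff dvd_mod_diff) auto
    ultimately have "int N dvd int (((c + y) mod N + (N - c mod N)) mod N) - int y" by simp
    then have "((c + y) mod N + (N - c mod N)) mod N = y" using N y by (intro eq_by_dvd) auto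
    then show ?thesis using q by simp
  qed
  have inv: "image_mset ?g (image_mset ?f X) = X" if "set_mset X \<subseteq> UNIV \<times> {0..<N}" for X
  proof -
    have "image_mset ?g (image_mset ?f X) = image_mset (\<lambda>q. ?g (?f q)) X" by (simp add: image_mset.compositionality comp_def)
    also have "\<dots> = image_mset (\<lambda>q. q) X" using that gf by (intro image_mset_cong) auto
    finally show ?thesis by simp
  qed
  assume "image_mset ?f A = image_mset ?f B"
  then have "image_mset ?g (image_mset ?f A) = image_mset ?g (image_mset ?f B)" by simp
  then show "A = B" using inv[OF assms(1)] inv[OF assms(2)] by simp
qed simp

lemma card_triple:
  assumes "finite A" "finite B" "finite C"
  shows "of_nat (card {(i, a, b). i \<in> A \<and> a \<in> B \<and> b \<in> C \<and> P i a b}) =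
         (\<Sum>i\<in>A. \<Sum>a\<in>B. \<Sum>b\<in>C. if P i a b then 1 else (0::complex))"
proof -
  have e: "{(i, a, b). i \<in> A \<and> a \<in> B \<and> b \<in> C \<and> P i a b} = {q \<in> A \<times> B \<times> C. P (fst q) (fst (snd q)) (snd (snd q))}"
    by auto
  have "of_nat (card {q \<in> A \<times> B \<times> C. P (fst q) (fst (snd q)) (snd (snd q))}) =
        (\<Sum>q\<in>{q \<in> A \<times> B \<times> C. P (fst q) (fst (snd q)) (snd (snd q))}. (1::complex))" by simp
  also have "\<dots> = (\<Sum>q\<in>A \<times> B \<times> C. if P (fst q) (fst (snd q)) (snd (snd q)) then 1 else 0)"
    using assms by (intro sum.inter_filter) auto
  also have "\<dots> = (\<Sum>i\<in>A. \<Sum>a\<in>B. \<Sum>b\<in>C. if P i a b then 1 else (0::complex))"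
    by (simp add: sum.cartesian_product split_def)
  finally show ?thesis unfolding e .
qed

lemma sum_shift_PiE:
  fixes p :: nat and F :: "(nat \<Rightarrow> 'a) \<Rightarrow> complex"
  assumes p: "0 < p"
  shows "(\<Sum>b\<in>PiE {0..<p} (\<lambda>_. B0). F b) = (\<Sum>b\<in>PiE {0..<p} (\<lambda>_. B0). F (\<lambda>k\<in>{0..<p}. b ((k+1) mod p)))"
proof (rule sum.reindex_bij_witness[where j="\<lambda>b. \<lambda>k\<in>{0..<p}. b ((k+p-1) mod p)" and i="\<lambda>b. \<lambda>k\<in>{0..<p}. b ((k+1) mod p)"])
  fix b assume b: "b \<in> PiE {0..<p} (\<lambda>_. B0)"
  show "(\<lambda>k\<in>{0..<p}. (\<lambda>k\<in>{0..<p}. b ((k+p-1) mod p)) ((k+1) mod p)) = b"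
  proof (rule PiE1_eqI[OF b])
    fix k assume k: "k < p"
    then show "(\<lambda>k\<in>{0..<p}. b ((k+p-1) mod p)) ((k+1) mod p) = b k"
      using pred_succ[OF k] p by simp
  qed
  show "(\<lambda>k\<in>{0..<p}. b ((k+p-1) mod p)) \<in> PiE {0..<p} (\<lambda>_. B0)" using b p by auto
  show "F (\<lambda>k\<in>{0..<p}. (\<lambda>k\<in>{0..<p}. b ((k+p-1) mod p)) ((k+1) mod p)) = F b"
  proof -
    have "(\<lambda>k\<in>{0..<p}. (\<lambda>k\<in>{0..<p}. b ((k+p-1) mod p)) ((k+1) mod p)) = b"
    proof (rule PiE1_eqI[OF b])
      fix k assume k: "k < p"
      then show "(\<lambda>k\<in>{0..<p}. b ((k+p-1) mod p)) ((k+1) mod p) = b k"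
        using pred_succ[OF k] p by simp
    qed
    then show ?thesis by simp
  qed
next
  fix b assume b: "b \<in> PiE {0..<p} (\<lambda>_. B0)"
  show "(\<lambda>k\<in>{0..<p}. (\<lambda>k\<in>{0..<p}. b ((k+1) mod p)) ((k+p-1) mod p)) = b"
  proof (rule PiE1_eqI[OF b])
    fix k assume k: "k < p"
    have "Suc ((k + p - 1) mod p) mod p = k" using succ_pred[OF k] by simp
    then show "(\<lambda>k\<in>{0..<p}. b ((k+1) mod p)) ((k+p-1) mod p) = b k"
      using p by simp
  qed
  show "(\<lambda>k\<in>{0..<p}. b ((k+1) mod p)) \<in> PiE {0..<p} (\<lambda>_. B0)" using b p by auto
qed

lemma Apos_shift:
  "Apos p s t (\<lambda>k\<in>{0..<p}. (c + b k) mod N) = image_mset (\<lambda>(m,y). (m, (c + y) mod N)) (Apos p s t b)"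
  "Aneg p s t (\<lambda>k\<in>{0..<p}. (c + b k) mod N) = image_mset (\<lambda>(m,y). (m, (c + y) mod N)) (Aneg p s t b)"
  unfolding Apos_def Aneg_def image_mset_union image_mset.compositionality
  by (auto intro!: arg_cong2[where f="(+)"] image_mset_cong)

lemma Apos_range:
  assumes "\<forall>k<p. b k < N"
  shows "set_mset (Apos p s t b) \<subseteq> UNIV \<times> {0..<N}" "set_mset (Aneg p s t b) \<subseteq> UNIV \<times> {0..<N}"
  using assms by (auto simp: Apos_def Aneg_def)

lemma mcall_shift:
  assumes N: "0 < N" and b: "b \<in> PiE {0..<p} (\<lambda>_. {0..<N})"
  shows "mcall r p S (Phi N r p c b) \<longleftrightarrow> mcall r p S (\<lambda>x. b)"
proof -
  have bN: "\<forall>k<p. b k < N" using b by auto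
  have "Apos p (S x) (S ((x+1) mod r)) (Phi N r p c b x) = Aneg p (S x) (S ((x+1) mod r)) (Phi N r p c b x)
     \<longleftrightarrow> Apos p (S x) (S ((x+1) mod r)) b = Aneg p (S x) (S ((x+1) mod r)) b" if x: "x < r" for x
  proof -
    have eqP: "Phi N r p c b x = (\<lambda>k\<in>{0..<p}. (c x + b k) mod N)" using x by (simp add: Phi_def)
    show ?thesis
      unfolding eqP Apos_shift by (intro shift_inj_mset Apos_range bN N)
  qed
  then show ?thesis unfolding mcall_def by auto
qed

lemma cond_equiv:
  assumes p: "0 < p" and r: "0 < r" and x: "x < r"
  shows "(Apos p (Phi M r p i a x) (Phi M r p i a ((x+1) mod r)) (\<lambda>k\<in>{0..<p}. b ((k+1) mod p)) =
          Aneg p (Phi M r p i a x) (Phi M r p i a ((x+1) mod r)) (\<lambda>k\<in>{0..<p}. b ((k+1) mod p)))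
     \<longleftrightarrow> cond_E M p r i a b x"
proof -
  let ?x' = "(x+1) mod r"
  have x': "?x' < r" using r by simp
  let ?s = "\<lambda>k. (i x + a k) mod M" and ?t = "\<lambda>k. (i ?x' + a k) mod M"
  have kp: "k < p \<Longrightarrow> (k+1) mod p < p" for k by simp
  have "Apos p (Phi M r p i a x) (Phi M r p i a ?x') (\<lambda>k\<in>{0..<p}. b ((k+1) mod p))
     = image_mset (\<lambda>k. (?t k, b ((k+1) mod p))) (mset [0..<p]) + image_mset (\<lambda>k. (?s ((k+1) mod p), b ((k+1) mod p))) (mset [0..<p])"
    unfolding Apos_def using x x' kp by (intro arg_cong2[where f="(+)"] image_mset_cong) (auto simp: Phi_def)
  also have "image_mset (\<lambda>k. (?s ((k+1) mod p), b ((k+1) mod p))) (mset [0..<p]) = image_mset (\<lambda>y. (?s y, b y)) (mset [0..<p])"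
    by (rule image_mset_succ[OF p, where f="\<lambda>y. (?s y, b y)"])
  finally have A0: "Apos p (Phi M r p i a x) (Phi M r p i a ?x') (\<lambda>k\<in>{0..<p}. b ((k+1) mod p))
     = image_mset (\<lambda>k. (?t k, b ((k+1) mod p))) (mset [0..<p]) + image_mset (\<lambda>y. (?s y, b y)) (mset [0..<p])" .
  have A: "Apos p (Phi M r p i a x) (Phi M r p i a ?x') (\<lambda>k\<in>{0..<p}. b ((k+1) mod p))
     = image_mset (\<lambda>y. (?s y, b y)) (mset [0..<p]) + image_mset (\<lambda>k. (?t k, b ((k+1) mod p))) (mset [0..<p])"
    unfolding A0 by (rule add.commute)
  have "Aneg p (Phi M r p i a x) (Phi M r p i a ?x') (\<lambda>k\<in>{0..<p}. b ((k+1) mod p))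
     = image_mset (\<lambda>k. (?s k, b ((k+1) mod p))) (mset [0..<p]) + image_mset (\<lambda>k. (?t ((k+1) mod p), b ((k+1) mod p))) (mset [0..<p])"
    unfolding Aneg_def using x x' kp by (intro arg_cong2[where f="(+)"] image_mset_cong) (auto simp: Phi_def)
  also have "image_mset (\<lambda>k. (?t ((k+1) mod p), b ((k+1) mod p))) (mset [0..<p]) = image_mset (\<lambda>y. (?t y, b y)) (mset [0..<p])"
    by (rule image_mset_succ[OF p, where f="\<lambda>y. (?t y, b y)"])
  finally have B: "Aneg p (Phi M r p i a x) (Phi M r p i a ?x') (\<lambda>k\<in>{0..<p}. b ((k+1) mod p))
     = image_mset (\<lambda>k. (?s k, b ((k+1) mod p))) (mset [0..<p]) + image_mset (\<lambda>y. (?t y, b y)) (mset [0..<p])" .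
  show ?thesis unfolding A B cond_E_def ..
qed

theorem theorem2p2:
  fixes M N p r :: nat
  assumes "M \<ge> 1" "N \<ge> 1" "p \<ge> 1" "r \<ge> 1"
  shows "cpr M N p r =
    of_nat (card {(i, a, b). i \<in> PiE {0..<r} (\<lambda>_. {0..<M}) \<and> a \<in> PiE {0..<p} (\<lambda>_. {0..<M})
                   \<and> b \<in> PiE {0..<p} (\<lambda>_. {0..<N}) \<and> (\<forall>x<r. cond_E M p r i a b x)})
    / (of_nat M ^ (r + 1) * of_nat N)"
proof -
  have M: "0 < M" and N: "0 < N" and p: "0 < p" and r: "0 < r" using assms by auto
  let ?PSM = "PiE {0..<r} (\<lambda>_. PiE {0..<p} (\<lambda>_. {0..<M}))"
  let ?PSN = "PiE {0..<r} (\<lambda>_. PiE {0..<p} (\<lambda>_. {0..<N}))"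
  let ?C = "(of_nat M ^ (p*r) * of_nat N ^ (r*p) / of_nat (M*N) ^ ((p+1)*r) :: complex)"
  define W where "W = (\<Sum>S\<in>?PSM. \<Sum>B\<in>?PSN. if okd M r p S \<and> okd N r p B \<and> mcall r p S B then 1 else (0::complex))"
  define Y where "Y = (\<Sum>i\<in>PiE {0..<r} (\<lambda>_. {0..<M}). \<Sum>a\<in>PiE {0..<p} (\<lambda>_. {0..<M}). \<Sum>b\<in>PiE {0..<p} (\<lambda>_. {0..<N}).
                        if mcall r p (Phi M r p i a) (\<lambda>x. b) then 1 else (0::complex))"
  have S1: "cpr M N p r = ?C * W"
    unfolding cpr_step1[OF M p r] prod_T2[OF p r N] W_def by (simp add: sum_distrib_left)
  have inner: "of_nat N * (\<Sum>B\<in>?PSN. if okd M r p S \<and> okd N r p B \<and> mcall r p S B then 1 else (0::complex))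
      = (if okd M r p S then of_nat N ^ r * (\<Sum>b\<in>PiE {0..<p} (\<lambda>_. {0..<N}). if mcall r p S (\<lambda>x. b) then 1 else 0) else 0)" for S
  proof (cases "okd M r p S")
    case False
    then show ?thesis by simp
  next
    case True
    have "of_nat N * (\<Sum>B\<in>?PSN. if okd M r p S \<and> okd N r p B \<and> mcall r p S B then 1 else (0::complex))
        = of_nat N * (\<Sum>B\<in>?PSN. if okd N r p B then (if mcall r p S B then 1 else 0) else (0::complex))"
      using True by (intro arg_cong2[where f="(*)"] refl sum.cong) auto
    also have "\<dots> = (\<Sum>c\<in>PiE {0..<r} (\<lambda>_. {0..<N}). \<Sum>b\<in>PiE {0..<p} (\<lambda>_. {0..<N}). if mcall r p S (Phi N r p c b) then 1 else 0)"
      by (rule lemma_G[OF N r p])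
    also have "\<dots> = (\<Sum>c\<in>PiE {0..<r} (\<lambda>_. {0..<N}). \<Sum>b\<in>PiE {0..<p} (\<lambda>_. {0..<N}). if mcall r p S (\<lambda>x. b) then 1 else 0)"
      by (intro sum.cong refl) (simp add: mcall_shift[OF N])
    also have "\<dots> = of_nat N ^ r * (\<Sum>b\<in>PiE {0..<p} (\<lambda>_. {0..<N}). if mcall r p S (\<lambda>x. b) then 1 else 0)"
      by (simp add: card_PiE)
    finally show ?thesis using True by simp
  qed
  have S2: "of_nat M * of_nat N * W = of_nat N ^ r * Y"
  proof -
    have "of_nat M * of_nat N * W = of_nat M * (\<Sum>S\<in>?PSM. of_nat N * (\<Sum>B\<in>?PSN. if okd M r p S \<and> okd N r p B \<and> mcall r p S B then 1 else (0::complex)))"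
      unfolding W_def by (simp add: sum_distrib_left mult.assoc)
    also have "\<dots> = of_nat M * (\<Sum>S\<in>?PSM. if okd M r p S then of_nat N ^ r * (\<Sum>b\<in>PiE {0..<p} (\<lambda>_. {0..<N}). if mcall r p S (\<lambda>x. b) then 1 else 0) else 0)"
      unfolding inner ..
    also have "\<dots> = (\<Sum>i\<in>PiE {0..<r} (\<lambda>_. {0..<M}). \<Sum>a\<in>PiE {0..<p} (\<lambda>_. {0..<M}).
                       of_nat N ^ r * (\<Sum>b\<in>PiE {0..<p} (\<lambda>_. {0..<N}). if mcall r p (Phi M r p i a) (\<lambda>x. b) then 1 else 0))"
      by (rule lemma_G[OF M r p])
    also have "\<dots> = of_nat N ^ r * Y"
      unfolding Y_def by (simp add: sum_distrib_left)
    finally show ?thesis .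
  qed
  have S3: "Y = of_nat (card {(i, a, b). i \<in> PiE {0..<r} (\<lambda>_. {0..<M}) \<and> a \<in> PiE {0..<p} (\<lambda>_. {0..<M})
                   \<and> b \<in> PiE {0..<p} (\<lambda>_. {0..<N}) \<and> (\<forall>x<r. cond_E M p r i a b x)})"
  proof -
    have "Y = (\<Sum>i\<in>PiE {0..<r} (\<lambda>_. {0..<M}). \<Sum>a\<in>PiE {0..<p} (\<lambda>_. {0..<M}). \<Sum>b\<in>PiE {0..<p} (\<lambda>_. {0..<N}).
                        if mcall r p (Phi M r p i a) (\<lambda>x. \<lambda>k\<in>{0..<p}. b ((k+1) mod p)) then 1 else (0::complex))"
      unfolding Y_def by (intro sum.cong refl sum_shift_PiE[OF p])
    also have "\<dots> = (\<Sum>i\<in>PiE {0..<r} (\<lambda>_. {0..<M}). \<Sum>a\<in>PiE {0..<p} (\<lambda>_. {0..<M}). \<Sum>b\<in>PiE {0..<p} (\<lambda>_. {0..<N}).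
                        if (\<forall>x<r. cond_E M p r i a b x) then 1 else (0::complex))"
    proof (intro sum.cong refl)
      fix i a b
      have "mcall r p (Phi M r p i a) (\<lambda>x. \<lambda>k\<in>{0..<p}. b ((k+1) mod p)) \<longleftrightarrow> (\<forall>x<r. cond_E M p r i a b x)"
        using cond_equiv[OF p r, of _ M i a b] unfolding mcall_def by blast
      then show "(if mcall r p (Phi M r p i a) (\<lambda>x. \<lambda>k\<in>{0..<p}. b ((k+1) mod p)) then 1 else (0::complex)) =
                 (if (\<forall>x<r. cond_E M p r i a b x) then 1 else 0)" by simp
    qed
    also have "\<dots> = of_nat (card {(i, a, b). i \<in> PiE {0..<r} (\<lambda>_. {0..<M}) \<and> a \<in> PiE {0..<p} (\<lambda>_. {0..<M})
                   \<and> b \<in> PiE {0..<p} (\<lambda>_. {0..<N}) \<and> (\<forall>x<r. cond_E M p r i a b x)})"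
      by (rule card_triple[symmetric]) (auto intro: finite_PiE)
    finally show ?thesis .
  qed
  have Mc: "(of_nat M :: complex) \<noteq> 0" and Nc: "(of_nat N :: complex) \<noteq> 0" using M N by auto
  have W: "W = of_nat N ^ r * Y / (of_nat M * of_nat N)"
    using S2 Mc Nc by (simp add: field_simps)
  have K: "(of_nat (M*N) :: complex) ^ ((p+1)*r) = (of_nat M ^ (p*r) * of_nat N ^ (r*p)) * (of_nat M ^ r * of_nat N ^ r)"
    by (simp add: power_mult_distrib power_add algebra_simps)
  have "cpr M N p r = Y / (of_nat M ^ (r + 1) * of_nat N)"
    unfolding S1 W K using Mc Nc by (simp add: field_simps)
  then show ?thesis unfolding S3 .
qed

end
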